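(* Let $n,m\ge1$ and $N_0=\min\{n,m\}$. The maximum of $\tilde M_\diamond(\Theta)=\min_{\Phi\in\mathcal{DI}}\max_{|\psi\rangle}\|\Delta(\Theta-\Phi)(|\psi\rangle\langle\psi|)\|_1$ over all quantum channels $\Theta$ with input dimension $n$ and output dimension $m$ equals $$\frac{2(N_0-1)}{N_0}.$$ This value is attained both by a channel acting as the (discrete quantum) Fourier transform on an $N_0$-dimensional subspace spanned by incoherent basis states, and by the measurement in the $N_0$-dimensional Fourier basis whose outcomes are encoded in incoherent basis states.
   Context: Every finite-dimensional system carries a fixed orthonormal incoherent basis $\{|i\rangle\}$. The total dephasing map is $\Delta(\rho)=\sum_i|i\rangle\langle i|\rho|i\rangle\langle i|$. A quantum channel (operation) is a completely positive trace-preserving linear map. $\Phi$ is detection-incoherent ($\Phi\in\mathcal{DI}$) iff $\Delta\Phi=\Delta\Phi\Delta$; the minimum is over detection-incoherent channels with the same input and output dimensions as $\Theta$, and the maximum over pure input states. $\|\cdot\|_1$ is the trace norm $\|A\|_1=\operatorname{tr}\sqrt{A^\dagger A}$. *)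

theory Defs
  imports Complex_Main "Jordan_Normal_Form.Matrix"
begin

section \<open>Basic matrix notions (complex matrices, fixed incoherent basis = standard basis)\<close>

definition ctrace :: "complex mat \<Rightarrow> complex" where
  "ctrace A = (\<Sum>i<dim_row A. A $$ (i, i))"

definition adj :: "complex mat \<Rightarrow> complex mat" where
  "adj A = mat (dim_col A) (dim_row A) (\<lambda>(i, j). cnj (A $$ (j, i)))"

definition psd :: "nat \<Rightarrow> complex mat \<Rightarrow> bool" where
  "psd d A \<longleftrightarrow> A \<in> carrier_mat d d \<and>
     (\<forall>v \<in> carrier_vec d. Im (\<Sum>i<d. \<Sum>j<d. cnj (v $ i) * A $$ (i, j) * v $ j) = 0 \<and>
                          Re (\<Sum>i<d. \<Sum>j<d. cnj (v $ i) * A $$ (i, j) * v $ j) \<ge> 0)"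

definition psd_sqrt :: "complex mat \<Rightarrow> complex mat" where
  "psd_sqrt B = (THE P. psd (dim_row B) P \<and> P * P = B)"

definition trace_norm :: "complex mat \<Rightarrow> real" where
  "trace_norm A = Re (ctrace (psd_sqrt (adj A * A)))"

definition dephase :: "complex mat \<Rightarrow> complex mat" where
  "dephase A = mat (dim_row A) (dim_col A) (\<lambda>(i, j). if i = j then A $$ (i, i) else 0)"

text \<open>A linear map from n x n matrices to m x m matrices (values outside
  the n x n matrices are irrelevant).\<close>
definition lin_map :: "nat \<Rightarrow> nat \<Rightarrow> (complex mat \<Rightarrow> complex mat) \<Rightarrow> bool" where
  "lin_map n m \<Phi> \<longleftrightarrow>
     (\<forall>A \<in> carrier_mat n n. \<Phi> A \<in> carrier_mat m m) \<and>
     (\<forall>A \<in> carrier_mat n n. \<forall>B \<in> carrier_mat n n. \<Phi> (A + B) = \<Phi> A + \<Phi> B) \<and>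
     (\<forall>A \<in> carrier_mat n n. \<forall>c. \<Phi> (c \<cdot>\<^sub>m A) = c \<cdot>\<^sub>m \<Phi> A)"

definition blk :: "nat \<Rightarrow> complex mat \<Rightarrow> nat \<Rightarrow> nat \<Rightarrow> complex mat" where
  "blk n X a b = mat n n (\<lambda>(i, j). X $$ (a * n + i, b * n + j))"

text \<open>The map id_k \<otimes> \<Phi> acting on (k n) x (k n) matrices.\<close>
definition ampl :: "nat \<Rightarrow> nat \<Rightarrow> nat \<Rightarrow> (complex mat \<Rightarrow> complex mat) \<Rightarrow> complex mat \<Rightarrow> complex mat" where
  "ampl k n m \<Phi> X = mat (k * m) (k * m)
     (\<lambda>(r, c). \<Phi> (blk n X (r div m) (c div m)) $$ (r mod m, c mod m))"

definition completely_positive :: "nat \<Rightarrow> nat \<Rightarrow> (complex mat \<Rightarrow> complex mat) \<Rightarrow> bool" where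
  "completely_positive n m \<Phi> \<longleftrightarrow>
     (\<forall>k \<ge> 1. \<forall>X. psd (k * n) X \<longrightarrow> psd (k * m) (ampl k n m \<Phi> X))"

definition trace_preserving :: "nat \<Rightarrow> (complex mat \<Rightarrow> complex mat) \<Rightarrow> bool" where
  "trace_preserving n \<Phi> \<longleftrightarrow> (\<forall>A \<in> carrier_mat n n. ctrace (\<Phi> A) = ctrace A)"

definition quantum_channel :: "nat \<Rightarrow> nat \<Rightarrow> (complex mat \<Rightarrow> complex mat) \<Rightarrow> bool" where
  "quantum_channel n m \<Phi> \<longleftrightarrow>
     lin_map n m \<Phi> \<and> completely_positive n m \<Phi> \<and> trace_preserving n \<Phi>"

definition detection_incoherent :: "nat \<Rightarrow> (complex mat \<Rightarrow> complex mat) \<Rightarrow> bool" where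
  "detection_incoherent n \<Phi> \<longleftrightarrow>
     (\<forall>A \<in> carrier_mat n n. dephase (\<Phi> A) = dephase (\<Phi> (dephase A)))"

definition DI_channels :: "nat \<Rightarrow> nat \<Rightarrow> (complex mat \<Rightarrow> complex mat) set" where
  "DI_channels n m = {\<Phi>. quantum_channel n m \<Phi> \<and> detection_incoherent n \<Phi>}"

definition unit_vecs_c :: "nat \<Rightarrow> complex vec set" where
  "unit_vecs_c n = {\<psi> \<in> carrier_vec n. (\<Sum>i<n. (cmod (\<psi> $ i))\<^sup>2) = 1}"

definition proj :: "complex vec \<Rightarrow> complex mat" where
  "proj \<psi> = mat (dim_vec \<psi>) (dim_vec \<psi>) (\<lambda>(i, j). \<psi> $ i * cnj (\<psi> $ j))"

text \<open>min over DI channels of max over pure input states (written as Inf / Sup).\<close>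
definition M_tilde_diamond :: "nat \<Rightarrow> nat \<Rightarrow> (complex mat \<Rightarrow> complex mat) \<Rightarrow> real" where
  "M_tilde_diamond n m \<Theta> =
     (INF \<Phi> \<in> DI_channels n m. SUP \<psi> \<in> unit_vecs_c n.
        trace_norm (dephase (\<Theta> (proj \<psi>) - \<Phi> (proj \<psi>))))"

definition fourier_mat :: "nat \<Rightarrow> complex mat" where
  "fourier_mat N = mat N N (\<lambda>(j, k).
     exp (2 * pi * \<i> * of_nat (j * k) / of_nat N) / complex_of_real (sqrt (real N)))"

definition embed :: "nat \<Rightarrow> nat \<Rightarrow> complex mat" where
  "embed d N0 = mat d N0 (\<lambda>(i, j). if i = j then 1 else 0)"

definition ket0bra0 :: "nat \<Rightarrow> complex mat" where
  "ket0bra0 m = mat m m (\<lambda>(i, j). if i = 0 \<and> j = 0 then 1 else 0)"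

definition outside_weight :: "nat \<Rightarrow> nat \<Rightarrow> complex mat \<Rightarrow> complex" where
  "outside_weight n N0 \<rho> = (\<Sum>i\<in>{N0..<n}. \<rho> $$ (i, i))"

text \<open>Acts as the Fourier transform F_N0 between the subspaces spanned by the first
  N0 incoherent basis states of input and output; any weight outside that input
  subspace (only possible if n > m) is sent to |0><0|.\<close>
definition fourier_channel :: "nat \<Rightarrow> nat \<Rightarrow> complex mat \<Rightarrow> complex mat" where
  "fourier_channel n m \<rho> =
     (let N0 = min n m; V = embed m N0 * fourier_mat N0 * adj (embed n N0)
      in V * \<rho> * adj V + outside_weight n N0 \<rho> \<cdot>\<^sub>m ket0bra0 m)"

text \<open>Measurement in the N0-dimensional Fourier basis f_k = F|k> (k < N0) of the input
  subspace, outcome k recorded as |k><k| in the output; weight outside that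
  subspace (only possible if n > m) is sent to |0><0|.\<close>
definition fourier_measurement :: "nat \<Rightarrow> nat \<Rightarrow> complex mat \<Rightarrow> complex mat" where
  "fourier_measurement n m \<rho> =
     (let N0 = min n m; F = embed n N0 * fourier_mat N0;
          p = (\<lambda>k. \<Sum>i<n. \<Sum>j<n. cnj (F $$ (i, k)) * \<rho> $$ (i, j) * F $$ (j, k))
      in mat m m (\<lambda>(i, j). if i = j \<and> i < N0 then p i else 0)
         + outside_weight n N0 \<rho> \<cdot>\<^sub>m ket0bra0 m)"

end

theory Submission
  imports Defs
begin


lemma blk_idx: "(\<alpha>::nat) < k \<Longrightarrow> i < m \<Longrightarrow> \<alpha>*m+i < k*m"
proof -
  assume "\<alpha> < k" "i < m"
  then have "\<alpha>*m+i < Suc \<alpha> * m" by simp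
  also have "\<dots> \<le> k*m" using \<open>\<alpha> < k\<close> by (intro mult_le_mono1) simp
  finally show ?thesis .
qed

lemma sum_blocks: fixes k m :: nat shows "(\<Sum>r<k*m. f r) = (\<Sum>a<k. \<Sum>i<m. f (a*m+i)::'b::comm_monoid_add)"
proof -
  have "(\<Sum>r<k*m. f r) = (\<Sum>a<k. sum f {a*m..<a*m+m})"
    by (rule sum.nat_group[of f m k, symmetric])
  also have "\<dots> = (\<Sum>a<k. \<Sum>i<m. f (a*m+i))"
  proof (rule sum.cong[OF refl])
    fix a
    have "sum f {a*m..<a*m+m} = sum (\<lambda>i. f (i + a*m)) {0..<m}"
      using sum.shift_bounds_nat_ivl[of f 0 "a*m" m] by (simp add: add.commute)
    then show "sum f {a*m..<a*m+m} = (\<Sum>i<m. f (a*m+i))"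
      by (simp add: atLeast0LessThan add.commute)
  qed
  finally show ?thesis .
qed

definition qf :: "nat \<Rightarrow> complex mat \<Rightarrow> complex vec \<Rightarrow> complex" where
  "qf d A v = (\<Sum>i<d. \<Sum>j<d. cnj (v $ i) * A $$ (i, j) * v $ j)"

lemma psd_qf: "psd d A \<longleftrightarrow> A \<in> carrier_mat d d \<and>
   (\<forall>v \<in> carrier_vec d. Im (qf d A v) = 0 \<and> Re (qf d A v) \<ge> 0)"
  unfolding psd_def qf_def ..

definition kraus_form :: "nat \<Rightarrow> nat \<Rightarrow> 'a set \<Rightarrow> ('a \<Rightarrow> nat \<Rightarrow> nat \<Rightarrow> complex)
   \<Rightarrow> (complex mat \<Rightarrow> complex mat) \<Rightarrow> bool" where
  "kraus_form n m T K \<Theta> \<longleftrightarrow> (\<forall>\<rho>\<in>carrier_mat n n. \<Theta> \<rho> \<in> carrier_mat m m \<and>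
     (\<forall>i<m. \<forall>j<m. \<Theta> \<rho> $$ (i,j) = (\<Sum>t\<in>T. \<Sum>a<n. \<Sum>b<n. K t i a * \<rho> $$ (a,b) * cnj (K t j b))))"

lemma kraus_qf:
  assumes kf: "kraus_form n m T K \<Theta>" and X: "X \<in> carrier_mat (k*n) (k*n)" and fin: "finite T"
  shows "qf (k*m) (ampl k n m \<Theta> X) v =
     (\<Sum>t\<in>T. qf (k*n) X (vec (k*n) (\<lambda>x. \<Sum>i<m. v $ (x div n * m + i) * cnj (K t i (x mod n)))))"
proof -
  define E where "E = (\<lambda>t \<alpha> \<beta> i j a b. cnj (v $ (\<alpha>*m+i)) * K t i a * X $$ (\<alpha>*n+a, \<beta>*n+b) * cnj (K t j b) * v $ (\<beta>*m+j))"
  have bl: "blk n X \<alpha> \<beta> \<in> carrier_mat n n" for \<alpha> \<beta> unfolding blk_def by simp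
  have "qf (k*m) (ampl k n m \<Theta> X) v = (\<Sum>\<alpha><k. \<Sum>i<m. \<Sum>\<beta><k. \<Sum>j<m.
        cnj (v $ (\<alpha>*m+i)) * \<Theta> (blk n X \<alpha> \<beta>) $$ (i,j) * v $ (\<beta>*m+j))"
  proof -
    have "qf (k*m) (ampl k n m \<Theta> X) v = (\<Sum>\<alpha><k. \<Sum>i<m. \<Sum>\<beta><k. \<Sum>j<m.
        cnj (v $ (\<alpha>*m+i)) * ampl k n m \<Theta> X $$ (\<alpha>*m+i,\<beta>*m+j) * v $ (\<beta>*m+j))"
      unfolding qf_def sum_blocks ..
    also have "\<dots> = (\<Sum>\<alpha><k. \<Sum>i<m. \<Sum>\<beta><k. \<Sum>j<m.
        cnj (v $ (\<alpha>*m+i)) * \<Theta> (blk n X \<alpha> \<beta>) $$ (i,j) * v $ (\<beta>*m+j))"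
    proof (intro sum.cong refl)
      fix \<alpha> i \<beta> j assume "\<alpha> \<in> {..<k}" "i \<in> {..<m}" "\<beta> \<in> {..<k}" "j \<in> {..<m}"
      then have a: "\<alpha>*m+i < k*m" "\<beta>*m+j < k*m" "i < m" "j < m"
        by (auto intro: blk_idx)
      show "cnj (v $ (\<alpha>*m+i)) * ampl k n m \<Theta> X $$ (\<alpha>*m+i,\<beta>*m+j) * v $ (\<beta>*m+j) =
            cnj (v $ (\<alpha>*m+i)) * \<Theta> (blk n X \<alpha> \<beta>) $$ (i,j) * v $ (\<beta>*m+j)"
        using a unfolding ampl_def by simp
    qed
    finally show ?thesis .
  qed
  also have "\<dots> = (\<Sum>\<alpha><k. \<Sum>i<m. \<Sum>\<beta><k. \<Sum>j<m. \<Sum>t\<in>T. \<Sum>a<n. \<Sum>b<n. E t \<alpha> \<beta> i j a b)"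
  proof (intro sum.cong refl)
    fix \<alpha> i \<beta> j assume "\<alpha> \<in> {..<k}" "i \<in> {..<m}" "\<beta> \<in> {..<k}" "j \<in> {..<m}"
    then have ij: "i < m" "j < m" by auto
    have "\<Theta> (blk n X \<alpha> \<beta>) $$ (i,j) = (\<Sum>t\<in>T. \<Sum>a<n. \<Sum>b<n. K t i a * X $$ (\<alpha>*n+a, \<beta>*n+b) * cnj (K t j b))"
      using kf bl[of \<alpha> \<beta>] ij unfolding kraus_form_def by (simp add: blk_def)
    then show "cnj (v $ (\<alpha>*m+i)) * \<Theta> (blk n X \<alpha> \<beta>) $$ (i,j) * v $ (\<beta>*m+j) =
        (\<Sum>t\<in>T. \<Sum>a<n. \<Sum>b<n. E t \<alpha> \<beta> i j a b)"
      unfolding E_def by (simp add: sum_distrib_left sum_distrib_right mult.assoc)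
  qed
  also have "\<dots> = (\<Sum>t\<in>T. \<Sum>\<alpha><k. \<Sum>\<beta><k. \<Sum>a<n. \<Sum>b<n. \<Sum>i<m. \<Sum>j<m. E t \<alpha> \<beta> i j a b)"
    by (simp only: sum.swap[where B=T] sum.swap[where A="{..<m}" and B="{..<n}"] sum.swap[where A="{..<m}" and B="{..<k}"])
  also have "\<dots> = (\<Sum>t\<in>T. qf (k*n) X (vec (k*n) (\<lambda>x. \<Sum>i<m. v $ (x div n * m + i) * cnj (K t i (x mod n)))))"
  proof (rule sum.cong[OF refl])
    fix t
    have "qf (k*n) X (vec (k*n) (\<lambda>x. \<Sum>i<m. v $ (x div n * m + i) * cnj (K t i (x mod n)))) =
      (\<Sum>\<alpha><k. \<Sum>a<n. \<Sum>\<beta><k. \<Sum>b<n. \<Sum>i<m. \<Sum>j<m. E t \<alpha> \<beta> i j a b)"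
      unfolding qf_def sum_blocks
    proof (intro sum.cong refl)
      fix \<alpha> a \<beta> b assume "\<alpha> \<in> {..<k}" "a \<in> {..<n}" "\<beta> \<in> {..<k}" "b \<in> {..<n}"
      then have a: "\<alpha>*n+a < k*n" "\<beta>*n+b < k*n" "a < n" "b < n"
        by (auto intro: blk_idx)
      show "cnj (vec (k*n) (\<lambda>x. \<Sum>i<m. v $ (x div n * m + i) * cnj (K t i (x mod n))) $ (\<alpha>*n+a)) *
           X $$ (\<alpha>*n+a, \<beta>*n+b) * vec (k*n) (\<lambda>x. \<Sum>i<m. v $ (x div n * m + i) * cnj (K t i (x mod n))) $ (\<beta>*n+b)
         = (\<Sum>i<m. \<Sum>j<m. E t \<alpha> \<beta> i j a b)"
        using a unfolding E_def by (simp add: sum_distrib_left sum_distrib_right mult_ac)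
    qed
    also have "\<dots> = (\<Sum>\<alpha><k. \<Sum>\<beta><k. \<Sum>a<n. \<Sum>b<n. \<Sum>i<m. \<Sum>j<m. E t \<alpha> \<beta> i j a b)"
      by (simp only: sum.swap[where A="{..<n}" and B="{..<k}"])
    finally show "(\<Sum>\<alpha><k. \<Sum>\<beta><k. \<Sum>a<n. \<Sum>b<n. \<Sum>i<m. \<Sum>j<m. E t \<alpha> \<beta> i j a b) =
       qf (k*n) X (vec (k*n) (\<lambda>x. \<Sum>i<m. v $ (x div n * m + i) * cnj (K t i (x mod n))))" by simp
  qed
  finally show ?thesis .
qed


lemma kraus_cp:
  assumes kf: "kraus_form n m T K \<Theta>" and fin: "finite T"
  shows "completely_positive n m \<Theta>"
  unfolding completely_positive_def
proof (intro allI impI)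
  fix k :: nat and X assume "1 \<le> k" and X: "psd (k*n) X"
  then have Xc: "X \<in> carrier_mat (k*n) (k*n)" and Xq: "\<forall>v \<in> carrier_vec (k*n). Im (qf (k*n) X v) = 0 \<and> Re (qf (k*n) X v) \<ge> 0"
    unfolding psd_qf by auto
  show "psd (k*m) (ampl k n m \<Theta> X)"
    unfolding psd_qf
  proof (intro conjI ballI)
    show "ampl k n m \<Theta> X \<in> carrier_mat (k*m) (k*m)" unfolding ampl_def by simp
  next
    fix v :: "complex vec" assume "v \<in> carrier_vec (k*m)"
    show "Im (qf (k*m) (ampl k n m \<Theta> X) v) = 0"
      unfolding kraus_qf[OF kf Xc fin] Im_sum using Xq by (intro sum.neutral) auto
    show "Re (qf (k*m) (ampl k n m \<Theta> X) v) \<ge> 0"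
      unfolding kraus_qf[OF kf Xc fin] Re_sum using Xq by (intro sum_nonneg) auto
  qed
qed

lemma kraus_lin:
  assumes kf: "kraus_form n m T K \<Theta>"
  shows "lin_map n m \<Theta>"
  unfolding lin_map_def
proof (intro conjI ballI allI)
  fix A :: "complex mat" assume "A \<in> carrier_mat n n" then show "\<Theta> A \<in> carrier_mat m m" using kf unfolding kraus_form_def by auto
next
  fix A B :: "complex mat" assume A: "A \<in> carrier_mat n n" and B: "B \<in> carrier_mat n n"
  then have AB: "A + B \<in> carrier_mat n n" by simp
  have cA: "\<Theta> A \<in> carrier_mat m m" and cB: "\<Theta> B \<in> carrier_mat m m" and cAB: "\<Theta> (A+B) \<in> carrier_mat m m"
    using kf A B AB unfolding kraus_form_def by auto
  show "\<Theta> (A + B) = \<Theta> A + \<Theta> B"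
  proof (rule eq_matI)
    fix i j assume "i < dim_row (\<Theta> A + \<Theta> B)" "j < dim_col (\<Theta> A + \<Theta> B)"
    then have ij: "i < m" "j < m" using cA cB by auto
    have "\<Theta> (A+B) $$ (i,j) = (\<Sum>t\<in>T. \<Sum>a<n. \<Sum>b<n. K t i a * (A+B) $$ (a,b) * cnj (K t j b))"
      using kf AB ij unfolding kraus_form_def by auto
    also have "\<dots> = (\<Sum>t\<in>T. \<Sum>a<n. \<Sum>b<n. K t i a * A $$ (a,b) * cnj (K t j b)) +
       (\<Sum>t\<in>T. \<Sum>a<n. \<Sum>b<n. K t i a * B $$ (a,b) * cnj (K t j b))"
      using A B by (simp add: sum.distrib[symmetric] algebra_simps)
    also have "\<dots> = \<Theta> A $$ (i,j) + \<Theta> B $$ (i,j)"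
      using kf A B ij unfolding kraus_form_def by auto
    finally show "\<Theta> (A + B) $$ (i, j) = (\<Theta> A + \<Theta> B) $$ (i, j)" using ij cA cB by simp
  qed (use cA cB cAB in auto)
next
  fix A :: "complex mat" and c :: complex assume A: "A \<in> carrier_mat n n"
  then have cAc: "c \<cdot>\<^sub>m A \<in> carrier_mat n n" by simp
  have cA: "\<Theta> A \<in> carrier_mat m m" and cAB: "\<Theta> (c \<cdot>\<^sub>m A) \<in> carrier_mat m m"
    using kf A cAc unfolding kraus_form_def by auto
  show "\<Theta> (c \<cdot>\<^sub>m A) = c \<cdot>\<^sub>m \<Theta> A"
  proof (rule eq_matI)
    fix i j assume "i < dim_row (c \<cdot>\<^sub>m \<Theta> A)" "j < dim_col (c \<cdot>\<^sub>m \<Theta> A)"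
    then have ij: "i < m" "j < m" using cA by auto
    have "\<Theta> (c \<cdot>\<^sub>m A) $$ (i,j) = (\<Sum>t\<in>T. \<Sum>a<n. \<Sum>b<n. K t i a * (c \<cdot>\<^sub>m A) $$ (a,b) * cnj (K t j b))"
      using kf cAc ij unfolding kraus_form_def by auto
    also have "\<dots> = c * (\<Sum>t\<in>T. \<Sum>a<n. \<Sum>b<n. K t i a * A $$ (a,b) * cnj (K t j b))"
      using A by (simp add: sum_distrib_left mult_ac)
    also have "\<dots> = c * \<Theta> A $$ (i,j)"
      using kf A ij unfolding kraus_form_def by auto
    finally show "\<Theta> (c \<cdot>\<^sub>m A) $$ (i, j) = (c \<cdot>\<^sub>m \<Theta> A) $$ (i, j)" using ij cA by simp
  qed (use cA cAB in auto)
qed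

lemma kraus_tp:
  assumes kf: "kraus_form n m T K \<Theta>"
    and compl: "\<And>a b. a < n \<Longrightarrow> b < n \<Longrightarrow> (\<Sum>t\<in>T. \<Sum>i<m. cnj (K t i b) * K t i a) = (if a = b then 1 else 0)"
  shows "trace_preserving n \<Theta>"
  unfolding trace_preserving_def
proof (intro ballI)
  fix \<rho> :: "complex mat" assume \<rho>: "\<rho> \<in> carrier_mat n n"
  then have c: "\<Theta> \<rho> \<in> carrier_mat m m" using kf unfolding kraus_form_def by auto
  have "ctrace (\<Theta> \<rho>) = (\<Sum>i<m. \<Sum>t\<in>T. \<Sum>a<n. \<Sum>b<n. K t i a * \<rho> $$ (a,b) * cnj (K t i b))"
    unfolding ctrace_def using c kf \<rho> unfolding kraus_form_def by (auto intro!: sum.cong)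
  also have "\<dots> = (\<Sum>a<n. \<Sum>b<n. \<Sum>t\<in>T. \<Sum>i<m. K t i a * \<rho> $$ (a,b) * cnj (K t i b))"
    by (simp only: sum.swap[where A="{..<m}" and B="{..<n}"] sum.swap[where A=T and B="{..<n}"]
          sum.swap[where A="{..<m}" and B=T])
  also have "\<dots> = (\<Sum>a<n. \<Sum>b<n. \<rho> $$ (a,b) * (\<Sum>t\<in>T. \<Sum>i<m. cnj (K t i b) * K t i a))"
    by (simp add: sum_distrib_left mult_ac)
  also have "\<dots> = (\<Sum>a<n. \<Sum>b<n. \<rho> $$ (a,b) * (if a = b then 1 else 0))"
    using compl by (intro sum.cong refl) auto
  also have "\<dots> = (\<Sum>a<n. \<rho> $$ (a,a))"
    by (simp add: if_distrib cong: if_cong)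
  also have "\<dots> = ctrace \<rho>" unfolding ctrace_def using \<rho> by simp
  finally show "ctrace (\<Theta> \<rho>) = ctrace \<rho>" .
qed

lemma ampl_one:
  assumes "\<rho> \<in> carrier_mat n n" "\<Theta> \<rho> \<in> carrier_mat m m"
  shows "ampl 1 n m \<Theta> \<rho> = \<Theta> \<rho>"
proof -
  have "blk n \<rho> 0 0 = \<rho>" using assms(1) by (intro eq_matI) (auto simp: blk_def)
  then show ?thesis using assms(2) by (intro eq_matI) (auto simp: ampl_def)
qed

lemma channel_pos:
  assumes "quantum_channel n m \<Theta>" "psd n \<rho>"
  shows "psd m (\<Theta> \<rho>)"
proof -
  have c: "\<rho> \<in> carrier_mat n n" using assms(2) unfolding psd_def by auto
  then have c2: "\<Theta> \<rho> \<in> carrier_mat m m" using assms(1) unfolding quantum_channel_def lin_map_def by auto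
  have "psd (1*m) (ampl 1 n m \<Theta> \<rho>)" using assms unfolding quantum_channel_def completely_positive_def by auto
  then show ?thesis using ampl_one[where \<Theta>=\<Theta>, OF c c2] by simp
qed

lemma blk_ampl:
  assumes "\<alpha> < k" "\<beta> < k" and cP: "\<And>A. A \<in> carrier_mat n n \<Longrightarrow> \<Psi> A \<in> carrier_mat n n"
  shows "blk n (ampl k n n \<Psi> X) \<alpha> \<beta> = \<Psi> (blk n X \<alpha> \<beta>)"
proof -
  have c: "\<Psi> (blk n X \<alpha> \<beta>) \<in> carrier_mat n n" using cP by (simp add: blk_def)
  show ?thesis
  proof (rule eq_matI)
    fix i j assume "i < dim_row (\<Psi> (blk n X \<alpha> \<beta>))" "j < dim_col (\<Psi> (blk n X \<alpha> \<beta>))"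
    then have ij: "i < n" "j < n" using c by auto
    have "\<alpha>*n+i < k*n" "\<beta>*n+j < k*n" using assms ij by (auto intro: blk_idx)
    then show "blk n (ampl k n n \<Psi> X) \<alpha> \<beta> $$ (i, j) = \<Psi> (blk n X \<alpha> \<beta>) $$ (i, j)"
      using ij by (simp add: blk_def ampl_def mult.commute)
  qed (use c in \<open>auto simp: blk_def\<close>)
qed

lemma cp_comp:
  assumes cp: "completely_positive n m \<Theta>" and kf: "kraus_form n n T K \<Psi>" and fin: "finite T"
  shows "completely_positive n m (\<Theta> \<circ> \<Psi>)"
  unfolding completely_positive_def
proof (intro allI impI)
  fix k :: nat and X assume k: "1 \<le> k" and X: "psd (k*n) X"
  have cP: "\<And>A. A \<in> carrier_mat n n \<Longrightarrow> \<Psi> A \<in> carrier_mat n n" using kf unfolding kraus_form_def by auto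
  have "psd (k*n) (ampl k n n \<Psi> X)" using kraus_cp[OF kf fin] k X unfolding completely_positive_def by auto
  then have "psd (k*m) (ampl k n m \<Theta> (ampl k n n \<Psi> X))" using cp k unfolding completely_positive_def by auto
  moreover have "ampl k n m \<Theta> (ampl k n n \<Psi> X) = ampl k n m (\<Theta> \<circ> \<Psi>) X"
  proof (rule eq_matI)
    fix r c assume "r < dim_row (ampl k n m (\<Theta> \<circ> \<Psi>) X)" "c < dim_col (ampl k n m (\<Theta> \<circ> \<Psi>) X)"
    then have rc: "r < k*m" "c < k*m" unfolding ampl_def by auto
    then have "r div m < k" "c div m < k" by (auto simp: less_mult_imp_div_less)
    then have "blk n (ampl k n n \<Psi> X) (r div m) (c div m) = \<Psi> (blk n X (r div m) (c div m))"
      by (intro blk_ampl cP)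
    then show "ampl k n m \<Theta> (ampl k n n \<Psi> X) $$ (r, c) = ampl k n m (\<Theta> \<circ> \<Psi>) X $$ (r, c)"
      using rc by (simp add: ampl_def[of k n m])
  qed (auto simp: ampl_def)
  ultimately show "psd (k*m) (ampl k n m (\<Theta> \<circ> \<Psi>) X)" by simp
qed



lemma sum_two_pts:
  fixes g :: "nat \<Rightarrow> complex"
  assumes "i < d" "j < d" "i \<noteq> j"
  shows "(\<Sum>b<d. g b * (if b = i then x else if b = j then y else 0)) = g i * x + g j * y"
proof -
  have "(\<Sum>b<d. g b * (if b = i then x else if b = j then y else 0)) =
        (\<Sum>b<d. (if b = i then g b * x else 0) + (if b = j then g b * y else 0))"
    using assms by (intro sum.cong) auto
  also have "\<dots> = g i * x + g j * y" using assms by (simp add: sum.distrib)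
  finally show ?thesis .
qed

lemma qf_two:
  assumes "i < d" "j < d" "i \<noteq> j"
  shows "qf d P (vec d (\<lambda>l. if l = i then 1 else if l = j then c else 0)) =
     P $$ (i,i) + c * P $$ (i,j) + cnj c * P $$ (j,i) + cnj c * c * P $$ (j,j)"
proof -
  have "qf d P (vec d (\<lambda>l. if l = i then 1 else if l = j then c else 0)) =
    (\<Sum>a<d. (\<Sum>b<d. (cnj (if a = i then 1 else if a = j then c else 0) * P $$ (a,b)) * (if b = i then 1 else if b = j then c else 0)))"
    unfolding qf_def by (intro sum.cong) auto
  also have "\<dots> = (\<Sum>a<d. (cnj (if a = i then 1 else if a = j then c else 0) * P $$ (a,i)) * 1 +
                            (cnj (if a = i then 1 else if a = j then c else 0) * P $$ (a,j)) * c)"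
    using assms by (intro sum.cong refl sum_two_pts)
  also have "\<dots> = (\<Sum>a<d. (P $$ (a,i) + P $$ (a,j) * c) * (if a = i then 1 else if a = j then cnj c else 0))"
    by (intro sum.cong) (auto simp: algebra_simps)
  also have "\<dots> = (P $$ (i,i) + P $$ (i,j) * c) * 1 + (P $$ (j,i) + P $$ (j,j) * c) * cnj c"
    using assms by (intro sum_two_pts)
  finally show ?thesis by (simp add: algebra_simps)
qed

lemma qf_one:
  assumes "i < d"
  shows "qf d P (vec d (\<lambda>l. if l = i then 1 else 0)) = P $$ (i,i)"
proof -
  have "qf d P (vec d (\<lambda>l. if l = i then 1 else 0)) =
    (\<Sum>a<d. (\<Sum>b<d. if b = i then (if a = i then P $$ (a,b) else 0) else 0))"
    unfolding qf_def by (intro sum.cong) auto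
  also have "\<dots> = P $$ (i,i)" using assms by simp
  finally show ?thesis .
qed

lemma psd_herm:
  assumes P: "psd d P" and ij: "i < d" "j < d"
  shows "P $$ (j,i) = cnj (P $$ (i,j))"
proof (cases "i = j")
  case True
  have "Im (qf d P (vec d (\<lambda>l. if l = i then 1 else 0))) = 0" using P unfolding psd_qf by auto
  then show ?thesis using True qf_one[OF ij(1), of P] by (simp add: complex_eq_iff)
next
  case False
  have q: "\<And>c. Im (qf d P (vec d (\<lambda>l. if l = i then 1 else if l = j then c else 0))) = 0" using P unfolding psd_qf by auto
  have "Im (P $$ (i,i)) = 0" "Im (P $$ (j,j)) = 0"
    using P qf_one[OF ij(1), of P] qf_one[OF ij(2), of P] unfolding psd_qf by (metis vec_carrier)+
  moreover have "Im (P $$ (i,i) + 1 * P $$ (i,j) + cnj 1 * P $$ (j,i) + cnj 1 * 1 * P $$ (j,j)) = 0"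
    using q[of 1] qf_two[OF ij False, of P 1] by simp
  moreover have "Im (P $$ (i,i) + \<i> * P $$ (i,j) + cnj \<i> * P $$ (j,i) + cnj \<i> * \<i> * P $$ (j,j)) = 0"
    using q[of \<i>] qf_two[OF ij False, of P \<i>] by simp
  ultimately show ?thesis by (simp add: complex_eq_iff)
qed


lemma dl_sums:
  fixes f a :: "nat \<Rightarrow> complex"
  assumes "i < d"
  shows "(\<Sum>l<d. (if i = l then a l else 0) * f l) = a i * f i"
    "(\<Sum>l<d. (if l = i then a l else 0) * f l) = a i * f i"
    "(\<Sum>l<d. f l * (if i = l then a l else 0)) = f i * a i"
    "(\<Sum>l<d. f l * (if l = i then a l else 0)) = f i * a i"
proof -
  have e: "\<And>g. (\<Sum>l<d. if l = i then g l else 0) = g i" using assms by simp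
  have "(\<Sum>l<d. (if i = l then a l else 0) * f l) = (\<Sum>l<d. if l = i then a l * f l else 0)" by (rule sum.cong) auto
  then show "(\<Sum>l<d. (if i = l then a l else 0) * f l) = a i * f i" using assms by simp
  have "(\<Sum>l<d. (if l = i then a l else 0) * f l) = (\<Sum>l<d. if l = i then a l * f l else 0)" by (rule sum.cong) auto
  then show "(\<Sum>l<d. (if l = i then a l else 0) * f l) = a i * f i" using assms by simp
  have "(\<Sum>l<d. f l * (if i = l then a l else 0)) = (\<Sum>l<d. if l = i then f l * a l else 0)" by (rule sum.cong) auto
  then show "(\<Sum>l<d. f l * (if i = l then a l else 0)) = f i * a i" using assms by simp
  have "(\<Sum>l<d. f l * (if l = i then a l else 0)) = (\<Sum>l<d. if l = i then f l * a l else 0)" by (rule sum.cong) auto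
  then show "(\<Sum>l<d. f l * (if l = i then a l else 0)) = f i * a i" using assms by simp
qed

lemma sqrt_unique:
  fixes s :: "nat \<Rightarrow> real"
  assumes s: "\<And>i. s i \<ge> 0" and P: "psd d P"
    and PP: "\<And>i j. i < d \<Longrightarrow> j < d \<Longrightarrow> (\<Sum>k<d. P$$(i,k) * P$$(k,j)) = (if i = j then complex_of_real (s i ^ 2) else 0)"
  shows "\<And>i j. i < d \<Longrightarrow> j < d \<Longrightarrow> P$$(i,j) = (if i = j then complex_of_real (s i) else 0)"
proof -
  define p where "p i j = P$$(i,j)" for i j
  define \<sigma> where "\<sigma> i = complex_of_real (s i)" for i
  have herm: "p j i = cnj (p i j)" if "i < d" "j < d" for i j using psd_herm[OF P that] unfolding p_def .
  have PP': "(\<Sum>k<d. p i k * p k j) = (if i = j then \<sigma> i * \<sigma> i else 0)" if "i < d" "j < d" for i j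
    using PP[OF that] unfolding p_def \<sigma>_def by (simp add: power2_eq_square)
  have comm: "p i j * \<sigma> j = \<sigma> i * p i j" if ij: "i < d" "j < d" for i j
  proof -
    have "(\<Sum>k<d. p i k * (\<Sum>l<d. p k l * p l j)) = (\<Sum>l<d. (\<Sum>k<d. p i k * p k l) * p l j)"
      unfolding sum_distrib_left sum_distrib_right mult.assoc by (rule sum.swap)
    also have "\<dots> = (\<Sum>l<d. (if i = l then \<sigma> i * \<sigma> i else 0) * p l j)"
      using ij PP' by (intro sum.cong) auto
    also have "\<dots> = \<sigma> i * \<sigma> i * p i j" using dl_sums(1)[OF ij(1), of "\<lambda>_. \<sigma> i * \<sigma> i"] by simp
    finally have e1: "(\<Sum>k<d. p i k * (\<Sum>l<d. p k l * p l j)) = \<sigma> i * \<sigma> i * p i j" .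
    have "(\<Sum>k<d. p i k * (\<Sum>l<d. p k l * p l j)) = (\<Sum>k<d. p i k * (if k = j then \<sigma> k * \<sigma> k else 0))"
      using ij PP' by (intro sum.cong) auto
    also have "\<dots> = p i j * (\<sigma> j * \<sigma> j)" using dl_sums(4)[OF ij(2), of "p i" "\<lambda>k. \<sigma> k * \<sigma> k"] by simp
    finally have "p i j * (\<sigma> j * \<sigma> j) = \<sigma> i * \<sigma> i * p i j" using e1 by metis
    then have "(\<sigma> j * \<sigma> j - \<sigma> i * \<sigma> i) * p i j = 0" by (simp add: algebra_simps)
    then have "p i j = 0 \<or> \<sigma> j * \<sigma> j = \<sigma> i * \<sigma> i" by (metis eq_iff_diff_eq_0 mult_eq_0_iff)
    then have "p i j = 0 \<or> s j * s j = s i * s i" unfolding \<sigma>_def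
      by (metis of_real_eq_iff of_real_mult)
    moreover have "s j * s j = s i * s i \<Longrightarrow> s j = s i" using s[of i] s[of j]
      by (metis power2_eq_square power2_eq_iff_nonneg)
    ultimately show ?thesis unfolding \<sigma>_def by auto
  qed
  define x where "x i j = p i j - (if i = j then \<sigma> i else 0)" for i j
  have xh: "x j i = cnj (x i j)" if "i < d" "j < d" for i j
    using herm[OF that] unfolding x_def \<sigma>_def by auto
  have key: "(\<Sum>j<d. x i j * x j l) = 0" if il: "i < d" "l < d" for i l
  proof -
    have star: "(\<Sum>j<d. p i j * x j l) = - \<sigma> i * x i l" if i: "i < d" for i
    proof -
      have "(\<Sum>j<d. p i j * x j l) = (\<Sum>j<d. p i j * p j l) - (\<Sum>j<d. p i j * (if j = l then \<sigma> j else 0))"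
        unfolding x_def by (simp add: algebra_simps sum_subtractf)
      also have "\<dots> = (if i = l then \<sigma> i * \<sigma> i else 0) - p i l * \<sigma> l"
        using PP'[OF i il(2)] il dl_sums(4)[OF il(2), of "p i" \<sigma>] by simp
      also have "\<dots> = - \<sigma> i * x i l" using comm[OF i il(2)] unfolding x_def by (auto simp: algebra_simps)
      finally show ?thesis .
    qed
    have "qf d P (vec d (\<lambda>j. x j l)) = (\<Sum>i<d. cnj (x i l) * (\<Sum>j<d. p i j * x j l))"
      unfolding qf_def p_def by (simp add: sum_distrib_left mult.assoc)
    also have "\<dots> = (\<Sum>i<d. - complex_of_real (s i * (cmod (x i l))\<^sup>2))"
    proof (rule sum.cong[OF refl])
      fix i assume "i \<in> {..<d}"
      then have "cnj (x i l) * (\<Sum>j<d. p i j * x j l) = cnj (x i l) * (- (complex_of_real (s i) * x i l))"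
        using star unfolding \<sigma>_def by simp
      also have "\<dots> = - complex_of_real (s i * (cmod (x i l))\<^sup>2)"
        by (simp only: of_real_mult complex_norm_square) (simp add: mult_ac)
      finally show "cnj (x i l) * (\<Sum>j<d. p i j * x j l) = - complex_of_real (s i * (cmod (x i l))\<^sup>2)" .
    qed
    also have "\<dots> = - (\<Sum>i<d. complex_of_real (s i * (cmod (x i l))\<^sup>2))"
      by (simp only: sum_negf)
    finally have "Re (qf d P (vec d (\<lambda>j. x j l))) = - (\<Sum>i<d. s i * (cmod (x i l))\<^sup>2)"
      by (simp add: Re_sum)
    moreover have "Re (qf d P (vec d (\<lambda>j. x j l))) \<ge> 0" using P unfolding psd_qf by auto
    ultimately have "(\<Sum>i<d. s i * (cmod (x i l))\<^sup>2) = 0"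
      using s by (smt (verit) mult_nonneg_nonneg sum_nonneg zero_le_power2)
    then have "\<forall>i\<in>{..<d}. s i * (cmod (x i l))\<^sup>2 = 0"
      using s by (subst sum_nonneg_eq_0_iff[symmetric]) auto
    then have z: "\<sigma> i * x i l = 0" if "i < d" for i using that unfolding \<sigma>_def by auto
    have "(\<Sum>j<d. x i j * x j l) = (\<Sum>j<d. p i j * x j l) - (\<Sum>j<d. (if i = j then \<sigma> i else 0) * x j l)"
    proof -
      have xij: "x i j = p i j - (if i = j then \<sigma> i else 0)" for j by (simp add: x_def)
      show ?thesis unfolding sum_subtractf[symmetric] by (rule sum.cong) (simp_all only: xij left_diff_distrib)
    qed
    also have "\<dots> = - \<sigma> i * x i l - \<sigma> i * x i l" using star[OF il(1)] il dl_sums(1)[OF il(1), of "\<lambda>_. \<sigma> i" "\<lambda>j. x j l"] by simp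
    finally show ?thesis using z[OF il(1)] by simp
  qed
  fix i j assume ij: "i < d" "j < d"
  have "(\<Sum>k<d. complex_of_real ((cmod (x i k))\<^sup>2)) = (\<Sum>k<d. x i k * x k i)"
  proof (rule sum.cong[OF refl])
    fix k assume "k \<in> {..<d}"
    then have "x k i = cnj (x i k)" using xh[of i k] ij by auto
    then show "complex_of_real ((cmod (x i k))\<^sup>2) = x i k * x k i" by (simp only: complex_norm_square)
  qed
  also have "\<dots> = 0" using key[OF ij(1) ij(1)] .
  finally have "(\<Sum>k<d. complex_of_real ((cmod (x i k))\<^sup>2)) = 0" .
  then have "(\<Sum>k<d. (cmod (x i k))\<^sup>2) = 0"
    by (metis of_real_eq_0_iff of_real_sum)
  then have "\<forall>k\<in>{..<d}. (cmod (x i k))\<^sup>2 = 0" by (subst sum_nonneg_eq_0_iff[symmetric]) auto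
  then have "x i j = 0" using ij by auto
  then show "P$$(i,j) = (if i = j then complex_of_real (s i) else 0)" unfolding x_def p_def \<sigma>_def by auto
qed


lemma mult_entry:
  assumes "A \<in> carrier_mat a b" "B \<in> carrier_mat b c" "i < a" "j < c"
  shows "(A * B) $$ (i,j) = (\<Sum>k<b. A $$ (i,k) * B $$ (k,j))"
  using assms by (simp add: scalar_prod_def atLeast0LessThan)

lemma adj_carrier[simp]: "adj A \<in> carrier_mat (dim_col A) (dim_row A)"
  unfolding adj_def by simp

lemma adj_index[simp]: "i < dim_col A \<Longrightarrow> j < dim_row A \<Longrightarrow> adj A $$ (i,j) = cnj (A $$ (j,i))"
  unfolding adj_def by simp

lemma adj_dims[simp]: "dim_row (adj A) = dim_col A" "dim_col (adj A) = dim_row A"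
  unfolding adj_def by simp_all

lemma trace_norm_diag:
  assumes D: "D \<in> carrier_mat m m" and diag: "\<And>i j. i < m \<Longrightarrow> j < m \<Longrightarrow> i \<noteq> j \<Longrightarrow> D$$(i,j) = 0"
  shows "trace_norm D = (\<Sum>i<m. cmod (D$$(i,i)))"
proof -
  define s where "s i = cmod (D$$(i,i))" for i
  define S where "S = mat m m (\<lambda>(i,j). if i = j then complex_of_real (s i) else 0)"
  define B where "B = adj D * D"
  have Sc: "S \<in> carrier_mat m m" unfolding S_def by simp
  have Bc: "B \<in> carrier_mat m m" unfolding B_def using D by auto
  have Bij: "B $$ (i,j) = (if i = j then complex_of_real (s i ^ 2) else 0)" if ij: "i < m" "j < m" for i j
  proof -
    have "B $$ (i,j) = (\<Sum>k<m. cnj (D $$ (k,i)) * D $$ (k,j))"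
      unfolding B_def using D ij by (subst mult_entry[of _ m m]) auto
    also have "\<dots> = (\<Sum>k<m. (if k = i then cnj (D $$ (i,i)) else 0) * D $$ (k,j))"
      using diag ij by (intro sum.cong) auto
    also have "\<dots> = cnj (D $$ (i,i)) * D $$ (i,j)" using dl_sums(2)[OF ij(1)] by simp
    also have "\<dots> = (if i = j then complex_of_real (s i ^ 2) else 0)"
    proof (cases "i = j")
      case True
      then show ?thesis unfolding s_def by (metis complex_norm_square mult.commute)
    next
      case False
      then show ?thesis using diag ij by simp
    qed
    finally show ?thesis .
  qed
  have SS: "(\<Sum>k<m. S$$(i,k) * S$$(k,j)) = (if i = j then complex_of_real (s i ^ 2) else 0)" if ij: "i < m" "j < m" for i j
  proof -
    have "(\<Sum>k<m. S$$(i,k) * S$$(k,j)) = (\<Sum>k<m. (if i = k then complex_of_real (s i) else 0) * S$$(k,j))"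
      using ij unfolding S_def by (intro sum.cong) auto
    also have "\<dots> = complex_of_real (s i) * S$$(i,j)" using dl_sums(1)[OF ij(1)] by simp
    finally show ?thesis using ij unfolding S_def by (simp add: power2_eq_square)
  qed
  have Spsd: "psd m S"
    unfolding psd_qf
  proof (intro conjI ballI Sc)
    fix v :: "complex vec" assume "v \<in> carrier_vec m"
    have "qf m S v = (\<Sum>i<m. cnj (v $ i) * ((\<Sum>j<m. (if i = j then complex_of_real (s i) else 0) * v $ j)))"
      unfolding qf_def S_def by (simp add: sum_distrib_left mult.assoc)
    also have "\<dots> = (\<Sum>i<m. complex_of_real (s i * (cmod (v $ i))\<^sup>2))"
    proof (rule sum.cong[OF refl])
      fix i assume "i \<in> {..<m}"
      then have "(\<Sum>j<m. (if i = j then complex_of_real (s i) else 0) * v $ j) = complex_of_real (s i) * v $ i"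
        using dl_sums(1)[of i m "\<lambda>_. complex_of_real (s i)"] by simp
      then show "cnj (v $ i) * (\<Sum>j<m. (if i = j then complex_of_real (s i) else 0) * v $ j) =
          complex_of_real (s i * (cmod (v $ i))\<^sup>2)"
        by (simp only: of_real_mult complex_norm_square) (simp add: mult_ac)
    qed
    finally have q: "qf m S v = complex_of_real (\<Sum>i<m. s i * (cmod (v $ i))\<^sup>2)" by simp
    show "Im (qf m S v) = 0" unfolding q by simp
    show "Re (qf m S v) \<ge> 0" unfolding q s_def by (simp add: sum_nonneg)
  qed
  have SSB: "S * S = B"
  proof (rule eq_matI)
    fix i j assume "i < dim_row B" "j < dim_col B"
    then have ij: "i < m" "j < m" using Bc by auto
    show "(S * S) $$ (i,j) = B $$ (i,j)" using Bij[OF ij] SS[OF ij] mult_entry[OF Sc Sc ij] by simp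
  qed (use Sc Bc in auto)
  have uniq: "P = S" if P: "psd m P \<and> P * P = B" for P
  proof -
    have Pc: "P \<in> carrier_mat m m" using P unfolding psd_def by auto
    have PP: "(\<Sum>k<m. P$$(i,k) * P$$(k,j)) = (if i = j then complex_of_real (s i ^ 2) else 0)" if ij: "i < m" "j < m" for i j
      using mult_entry[OF Pc Pc ij] P Bij[OF ij] by simp
    have e: "P$$(i,j) = (if i = j then complex_of_real (s i) else 0)" if ij: "i < m" "j < m" for i j
      using sqrt_unique[of s m P, OF _ _ PP ij] P unfolding s_def by auto
    show ?thesis using Pc Sc e unfolding S_def by (intro eq_matI) auto
  qed
  have "psd_sqrt B = S"
    unfolding psd_sqrt_def
  proof (rule the_equality)
    show "psd (dim_row B) S \<and> S * S = B" using Spsd SSB Bc by simp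
  next
    fix P assume "psd (dim_row B) P \<and> P * P = B"
    then show "P = S" using uniq Bc by simp
  qed
  then have "trace_norm D = Re (ctrace S)" unfolding trace_norm_def B_def by simp
  also have "\<dots> = (\<Sum>i<m. s i)" unfolding ctrace_def S_def by (simp add: Re_sum)
  finally show ?thesis unfolding s_def .
qed



lemma proj_carrier[simp]: "\<psi> \<in> carrier_vec n \<Longrightarrow> proj \<psi> \<in> carrier_mat n n"
  unfolding proj_def by simp

lemma proj_index[simp]: "i < dim_vec \<psi> \<Longrightarrow> j < dim_vec \<psi> \<Longrightarrow> proj \<psi> $$ (i,j) = \<psi> $ i * cnj (\<psi> $ j)"
  unfolding proj_def by simp

lemma proj_dims[simp]: "dim_row (proj \<psi>) = dim_vec \<psi>" "dim_col (proj \<psi>) = dim_vec \<psi>"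
  unfolding proj_def by simp_all

lemma proj_psd:
  assumes "\<psi> \<in> carrier_vec n"
  shows "psd n (proj \<psi>)"
  unfolding psd_qf
proof (intro conjI ballI)
  show "proj \<psi> \<in> carrier_mat n n" using assms by simp
  fix v :: "complex vec" assume "v \<in> carrier_vec n"
  define a where "a = (\<Sum>i<n. cnj (v $ i) * \<psi> $ i)"
  have "qf n (proj \<psi>) v = (\<Sum>i<n. \<Sum>j<n. (cnj (v $ i) * \<psi> $ i) * cnj (cnj (v $ j) * \<psi> $ j))"
    unfolding qf_def using assms by (intro sum.cong refl) (simp add: mult_ac)
  also have "\<dots> = a * cnj a" unfolding a_def cnj_sum sum_product ..
  also have "\<dots> = complex_of_real ((cmod a)\<^sup>2)" by (simp only: complex_norm_square)
  finally have q: "qf n (proj \<psi>) v = complex_of_real ((cmod a)\<^sup>2)" .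
  show "Im (qf n (proj \<psi>) v) = 0" "Re (qf n (proj \<psi>) v) \<ge> 0" unfolding q by simp_all
qed

lemma unit_ctrace:
  assumes "\<psi> \<in> unit_vecs_c n"
  shows "ctrace (proj \<psi>) = 1"
proof -
  have c: "\<psi> \<in> carrier_vec n" using assms unfolding unit_vecs_c_def by auto
  have "ctrace (proj \<psi>) = (\<Sum>i<n. \<psi> $ i * cnj (\<psi> $ i))" unfolding ctrace_def using c by simp
  also have "\<dots> = complex_of_real (\<Sum>i<n. (cmod (\<psi> $ i))\<^sup>2)"
    by (simp only: complex_norm_square of_real_sum)
  also have "\<dots> = 1" using assms unfolding unit_vecs_c_def by simp
  finally show ?thesis .
qed

lemma channel_carrier:
  "quantum_channel n m \<Theta> \<Longrightarrow> A \<in> carrier_mat n n \<Longrightarrow> \<Theta> A \<in> carrier_mat m m"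
  unfolding quantum_channel_def lin_map_def by auto

lemma diag_prob:
  assumes Q: "quantum_channel n m \<Theta>" and u: "\<psi> \<in> unit_vecs_c n"
  shows "\<And>i. i < m \<Longrightarrow> Im (\<Theta> (proj \<psi>) $$ (i,i)) = 0 \<and> Re (\<Theta> (proj \<psi>) $$ (i,i)) \<ge> 0"
    and "(\<Sum>i<m. \<Theta> (proj \<psi>) $$ (i,i)) = 1"
proof -
  have c: "\<psi> \<in> carrier_vec n" using u unfolding unit_vecs_c_def by auto
  have P: "psd m (\<Theta> (proj \<psi>))" by (rule channel_pos[OF Q proj_psd[OF c]])
  have cc: "\<Theta> (proj \<psi>) \<in> carrier_mat m m" using channel_carrier[OF Q] c by simp
  fix i assume i: "i < m"
  show "Im (\<Theta> (proj \<psi>) $$ (i,i)) = 0 \<and> Re (\<Theta> (proj \<psi>) $$ (i,i)) \<ge> 0"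
    using P qf_one[OF i, of "\<Theta> (proj \<psi>)"] unfolding psd_qf by (metis vec_carrier)
next
  have c: "\<psi> \<in> carrier_vec n" using u unfolding unit_vecs_c_def by auto
  have cc: "\<Theta> (proj \<psi>) \<in> carrier_mat m m" using channel_carrier[OF Q] c by simp
  have "ctrace (\<Theta> (proj \<psi>)) = ctrace (proj \<psi>)"
    using Q c unfolding quantum_channel_def trace_preserving_def by simp
  then show "(\<Sum>i<m. \<Theta> (proj \<psi>) $$ (i,i)) = 1" using unit_ctrace[OF u] cc unfolding ctrace_def by simp
qed

lemma dephase_carrier[simp]: "dephase A \<in> carrier_mat (dim_row A) (dim_col A)"
  unfolding dephase_def by simp

lemma dist_formula:
  assumes "A \<in> carrier_mat m m" "B \<in> carrier_mat m m"
  shows "trace_norm (dephase (A - B)) = (\<Sum>i<m. cmod (A $$ (i,i) - B $$ (i,i)))"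
proof -
  have c: "dephase (A - B) \<in> carrier_mat m m" using assms dephase_carrier[of "A - B"] by simp
  have "trace_norm (dephase (A - B)) = (\<Sum>i<m. cmod (dephase (A - B) $$ (i,i)))"
    by (rule trace_norm_diag[OF c]) (use assms in \<open>simp add: dephase_def\<close>)
  also have "\<dots> = (\<Sum>i<m. cmod (A $$ (i,i) - B $$ (i,i)))"
    using assms by (intro sum.cong refl) (simp add: dephase_def)
  finally show ?thesis .
qed

definition gdist :: "nat \<Rightarrow> nat \<Rightarrow> (complex mat \<Rightarrow> complex mat) \<Rightarrow> (complex mat \<Rightarrow> complex mat) \<Rightarrow> complex vec \<Rightarrow> real" where
  "gdist n m \<Theta> \<Phi> \<psi> = trace_norm (dephase (\<Theta> (proj \<psi>) - \<Phi> (proj \<psi>)))"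

lemma gdist_formula:
  assumes "quantum_channel n m \<Theta>" "quantum_channel n m \<Phi>" "\<psi> \<in> unit_vecs_c n"
  shows "gdist n m \<Theta> \<Phi> \<psi> = (\<Sum>i<m. cmod (\<Theta> (proj \<psi>) $$ (i,i) - \<Phi> (proj \<psi>) $$ (i,i)))"
proof -
  have c: "\<psi> \<in> carrier_vec n" using assms unfolding unit_vecs_c_def by auto
  show ?thesis unfolding gdist_def
    by (rule dist_formula) (use channel_carrier[OF assms(1)] channel_carrier[OF assms(2)] c in auto)
qed

lemma prob_cmod: "Im z = 0 \<Longrightarrow> Re z \<ge> 0 \<Longrightarrow> cmod z = Re z"
  by (simp add: cmod_def)

lemma gdist_bounds:
  assumes "quantum_channel n m \<Theta>" "quantum_channel n m \<Phi>" "\<psi> \<in> unit_vecs_c n"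
  shows "0 \<le> gdist n m \<Theta> \<Phi> \<psi>" "gdist n m \<Theta> \<Phi> \<psi> \<le> 2"
proof -
  show "0 \<le> gdist n m \<Theta> \<Phi> \<psi>" unfolding gdist_formula[OF assms] by (simp add: sum_nonneg)
  have "gdist n m \<Theta> \<Phi> \<psi> \<le> (\<Sum>i<m. cmod (\<Theta> (proj \<psi>) $$ (i,i)) + cmod (\<Phi> (proj \<psi>) $$ (i,i)))"
    unfolding gdist_formula[OF assms] by (intro sum_mono norm_triangle_ineq4)
  also have "\<dots> = (\<Sum>i<m. Re (\<Theta> (proj \<psi>) $$ (i,i)) + Re (\<Phi> (proj \<psi>) $$ (i,i)))"
    using diag_prob(1)[OF assms(1,3)] diag_prob(1)[OF assms(2,3)] by (intro sum.cong refl) (simp add: prob_cmod)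
  also have "\<dots> = 2" using diag_prob(2)[OF assms(1,3)] diag_prob(2)[OF assms(2,3)]
    by (simp add: sum.distrib flip: Re_sum)
  finally show "gdist n m \<Theta> \<Phi> \<psi> \<le> 2" .
qed

lemma unit_e0: "1 \<le> n \<Longrightarrow> vec n (\<lambda>i. if i = 0 then 1 else 0) \<in> unit_vecs_c n"
proof -
  assume n: "1 \<le> n"
  have "(\<Sum>i<n. (cmod (vec n (\<lambda>i. if i = 0 then 1 else 0) $ i))\<^sup>2) = (\<Sum>i<n. if i = 0 then 1 else 0)"
    by (rule sum.cong) auto
  also have "\<dots> = 1" using n by simp
  finally show ?thesis unfolding unit_vecs_c_def by simp
qed

lemma DI_channel: "\<Phi> \<in> DI_channels n m \<Longrightarrow> quantum_channel n m \<Phi>"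
  unfolding DI_channels_def by auto

lemma M_gdist: "M_tilde_diamond n m \<Theta> = (INF \<Phi>\<in>DI_channels n m. SUP \<psi>\<in>unit_vecs_c n. gdist n m \<Theta> \<Phi> \<psi>)"
  unfolding M_tilde_diamond_def gdist_def ..

lemma M_upper:
  assumes n: "1 \<le> n" and Q: "quantum_channel n m \<Theta>" and P0: "\<Phi>0 \<in> DI_channels n m"
    and b: "\<And>\<psi>. \<psi> \<in> unit_vecs_c n \<Longrightarrow> gdist n m \<Theta> \<Phi>0 \<psi> \<le> b"
  shows "M_tilde_diamond n m \<Theta> \<le> b"
proof -
  have ne: "unit_vecs_c n \<noteq> {}" using unit_e0[OF n] by auto
  have bdd: "bdd_above ((gdist n m \<Theta> \<Phi>) ` unit_vecs_c n)" if "\<Phi> \<in> DI_channels n m" for \<Phi>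
    using gdist_bounds(2)[OF Q DI_channel[OF that]] by (intro bdd_aboveI[of _ 2]) auto
  have bddb: "bdd_below ((\<lambda>\<Phi>. SUP \<psi>\<in>unit_vecs_c n. gdist n m \<Theta> \<Phi> \<psi>) ` DI_channels n m)"
  proof (rule bdd_belowI[of _ 0])
    fix x assume "x \<in> (\<lambda>\<Phi>. SUP \<psi>\<in>unit_vecs_c n. gdist n m \<Theta> \<Phi> \<psi>) ` DI_channels n m"
    then obtain \<Phi> where \<Phi>: "\<Phi> \<in> DI_channels n m" and x: "x = (SUP \<psi>\<in>unit_vecs_c n. gdist n m \<Theta> \<Phi> \<psi>)" by auto
    obtain \<psi> where \<psi>: "\<psi> \<in> unit_vecs_c n" using ne by auto
    have "0 \<le> gdist n m \<Theta> \<Phi> \<psi>" using gdist_bounds(1)[OF Q DI_channel[OF \<Phi>] \<psi>] .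
    also have "\<dots> \<le> x" unfolding x using \<psi> bdd[OF \<Phi>] by (intro cSUP_upper)
    finally show "0 \<le> x" .
  qed
  have "M_tilde_diamond n m \<Theta> \<le> (SUP \<psi>\<in>unit_vecs_c n. gdist n m \<Theta> \<Phi>0 \<psi>)"
    unfolding M_gdist using bddb P0 by (intro cINF_lower)
  also have "\<dots> \<le> b" using ne b by (intro cSUP_least)
  finally show ?thesis .
qed

lemma M_lower:
  assumes n: "1 \<le> n" and Q: "quantum_channel n m \<Theta>" and ne: "DI_channels n m \<noteq> {}"
    and b: "\<And>\<Phi>. \<Phi> \<in> DI_channels n m \<Longrightarrow> \<exists>\<psi>\<in>unit_vecs_c n. b \<le> gdist n m \<Theta> \<Phi> \<psi>"
  shows "b \<le> M_tilde_diamond n m \<Theta>"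
  unfolding M_gdist
proof (rule cINF_greatest[OF ne])
  fix \<Phi> assume \<Phi>: "\<Phi> \<in> DI_channels n m"
  have bdd: "bdd_above ((gdist n m \<Theta> \<Phi>) ` unit_vecs_c n)"
    using gdist_bounds(2)[OF Q DI_channel[OF \<Phi>]] by (intro bdd_aboveI[of _ 2]) auto
  obtain \<psi> where \<psi>: "\<psi> \<in> unit_vecs_c n" "b \<le> gdist n m \<Theta> \<Phi> \<psi>" using b[OF \<Phi>] by auto
  show "b \<le> (SUP \<psi>\<in>unit_vecs_c n. gdist n m \<Theta> \<Phi> \<psi>)" using \<psi> bdd by (intro cSUP_upper2)
qed



lemma e_cis: "exp (2 * pi * \<i> * of_nat x / of_nat N) = cis (2 * pi * real x / real N)"
  by (simp add: cis_conv_exp mult_ac)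

lemma cis_root_ne1:
  assumes N: "N > 0" and ij: "i < N" "j < N" "i \<noteq> j"
  shows "cis (2 * pi * (real i - real j) / real N) \<noteq> 1"
proof
  assume "cis (2 * pi * (real i - real j) / real N) = 1"
  then have "cos (2 * pi * (real i - real j) / real N) = 1" by (simp add: complex_eq_iff)
  then obtain z :: int where z: "2 * pi * (real i - real j) / real N = real_of_int z * 2 * pi"
    by (subst (asm) cos_one_2pi_int) blast
  hence "2 * pi * ((real i - real j) - real_of_int z * real N) = 0"
    using N by (simp add: field_simps)
  hence "real_of_int (int i - int j) = real_of_int (z * int N)" by simp
  hence *: "int i - int j = z * int N" by (simp only: of_int_eq_iff)
  hence "\<bar>z\<bar> * int N = \<bar>int i - int j\<bar>" by (simp add: abs_mult)
  also have "\<dots> < int N" using ij by linarith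
  finally have "z = 0" using N by (smt (verit) mult_le_cancel_right1 of_nat_0_less_iff)
  with * ij show False by simp
qed

lemma expsum:
  assumes N: "N > 0" and ij: "i < N" "j < N"
  shows "(\<Sum>k<N. exp (2 * pi * \<i> * of_nat (k * i) / of_nat N) * cnj (exp (2 * pi * \<i> * of_nat (k * j) / of_nat N)))
     = (if i = j then of_nat N else 0)"
proof -
  define w where "w = cis (2 * pi * (real i - real j) / real N)"
  have t: "exp (2 * pi * \<i> * of_nat (k * i) / of_nat N) * cnj (exp (2 * pi * \<i> * of_nat (k * j) / of_nat N)) = w ^ k" for k
  proof -
    have a: "exp (2 * pi * \<i> * of_nat (k * i) / of_nat N) * cnj (exp (2 * pi * \<i> * of_nat (k * j) / of_nat N))
       = cis (2 * pi * real (k*i) / real N) * cis (- (2 * pi * real (k*j) / real N))"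
      unfolding e_cis by (simp add: cis_cnj)
    have b: "cis (2 * pi * real (k*i) / real N) * cis (- (2 * pi * real (k*j) / real N)) = cis (2 * pi * real (k*i) / real N + - (2 * pi * real (k*j) / real N))"
      by (rule cis_mult)
    have c: "2 * pi * real (k*i) / real N + - (2 * pi * real (k*j) / real N) = real k * (2 * pi * (real i - real j) / real N)"
      using N by (simp add: field_simps)
    have d: "cis (real k * (2 * pi * (real i - real j) / real N)) = w ^ k" unfolding w_def by (simp add: DeMoivre)
    show ?thesis by (simp only: a b c d)
  qed
  show ?thesis
  proof (cases "i = j")
    case True
    then have "w = 1" unfolding w_def by simp
    then show ?thesis using True t by simp
  next
    case False
    have w1: "w \<noteq> 1" unfolding w_def by (rule cis_root_ne1[OF N ij False])
    have a: "w ^ N = cis (real N * (2 * pi * (real i - real j) / real N))" unfolding w_def by (simp add: DeMoivre)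
    have b: "real N * (2 * pi * (real i - real j) / real N) = real_of_int (int i - int j) * (2 * pi)"
      using N by (simp add: field_simps)
    have c0: "cis (real_of_int z * (2 * pi)) = 1" for z :: int
      using cos_int_2pin[of z] sin_int_2pin[of z] by (simp add: complex_eq_iff mult.commute)
    have c: "cis (real_of_int (int i - int j) * (2 * pi)) = 1" by (rule c0)
    have "w ^ N = 1" by (simp only: a b c)
    then have "(\<Sum>k<N. w ^ k) = 0" using w1 by (simp add: geometric_sum)
    then show ?thesis using False t by simp
  qed
qed



lemma sum_prod_fs: "(\<Sum>t\<in>A \<times> B. h (fst t) (snd t)) = (\<Sum>s\<in>A. \<Sum>t\<in>B. h s t)"
  by (simp add: sum.cartesian_product split_def)

lemma double_delta:
  fixes X :: "'a::comm_monoid_add"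
  assumes "(g::nat) < n"
  shows "(\<Sum>a<n. \<Sum>b<n. if a = g \<and> b = g then X else 0) = X"
proof -
  have "(\<Sum>a<n. \<Sum>b<n. if a = g \<and> b = g then X else 0) = (\<Sum>a<n. if a = g then X else 0)"
    by (intro sum.cong refl) (cases "a = g", simp_all add: assms)
  also have "\<dots> = X" using assms by simp
  finally show ?thesis .
qed

lemma single_delta:
  fixes X :: "'a::comm_monoid_add"
  assumes "(f::nat) < m"
  shows "(\<Sum>i<m. if i = f then X else 0) = X"
  using assms by simp

lemma unit_kraus:
  fixes \<rho> :: "complex mat"
  assumes "g < n"
  shows "(\<Sum>a<n. \<Sum>b<n. (if i = f \<and> a = g then c else 0) * \<rho>$$(a,b) * cnj (if j = f \<and> b = g then c else 0))
     = (if i = f \<and> j = f then c * cnj c * \<rho>$$(g,g) else 0)"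
proof (cases "i = f \<and> j = f")
  case True
  have "(\<Sum>a<n. \<Sum>b<n. (if i = f \<and> a = g then c else 0) * \<rho>$$(a,b) * cnj (if j = f \<and> b = g then c else 0))
      = (\<Sum>a<n. \<Sum>b<n. if a = g \<and> b = g then c * cnj c * \<rho>$$(g,g) else 0)"
    using True by (intro sum.cong refl) (auto simp: mult_ac)
  also have "\<dots> = c * cnj c * \<rho>$$(g,g)" using assms by (rule double_delta)
  finally show ?thesis using True by simp
next
  case False
  then have "(\<Sum>a<n. \<Sum>b<n. (if i = f \<and> a = g then c else 0) * \<rho>$$(a,b) * cnj (if j = f \<and> b = g then c else 0))
      = (\<Sum>a<n. \<Sum>b<n. 0)" by (intro sum.cong refl) auto
  then show ?thesis using False by auto
qed

lemma unit_compl: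
  fixes c :: complex and f m a b g :: nat
  assumes "f < m"
  shows "(\<Sum>i<m. cnj (if i = f \<and> b = g then c else 0) * (if i = f \<and> a = g then c else 0))
     = (if a = g \<and> b = g then cnj c * c else 0)"
proof -
  have "(\<Sum>i<m. cnj (if i = f \<and> b = g then c else 0) * (if i = f \<and> a = g then c else 0))
     = (\<Sum>i<m. if i = f then (if a = g \<and> b = g then cnj c * c else 0) else 0)"
    by (intro sum.cong refl) auto
  also have "\<dots> = (if a = g \<and> b = g then cnj c * c else 0)" using single_delta[OF assms] assms by simp
  finally show ?thesis .
qed


definition unif :: "nat \<Rightarrow> complex mat \<Rightarrow> complex mat" where
  "unif m \<rho> = mat m m (\<lambda>(i,j). if i = j then ctrace \<rho> / of_nat m else 0)"

definition Kunif :: "nat \<Rightarrow> nat \<times> nat \<Rightarrow> nat \<Rightarrow> nat \<Rightarrow> complex" where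
  "Kunif m st i a = (if i = fst st \<and> a = snd st then complex_of_real (1 / sqrt (real m)) else 0)"

lemma cnj_c_m: "m > 0 \<Longrightarrow> complex_of_real (1 / sqrt (real m)) * cnj (complex_of_real (1 / sqrt (real m))) = 1 / of_nat m"
  by (simp flip: of_real_mult)

lemma unif_kraus:
  assumes m: "m > 0"
  shows "kraus_form n m ({..<m} \<times> {..<n}) (Kunif m) (unif m)"
  unfolding kraus_form_def
proof (intro ballI conjI allI impI)
  fix \<rho> :: "complex mat" assume \<rho>: "\<rho> \<in> carrier_mat n n"
  show "unif m \<rho> \<in> carrier_mat m m" unfolding unif_def by simp
  fix i j assume ij: "i < m" "j < m"
  define c where "c = complex_of_real (1 / sqrt (real m))"
  have "(\<Sum>t\<in>{..<m} \<times> {..<n}. \<Sum>a<n. \<Sum>b<n. Kunif m t i a * \<rho> $$ (a, b) * cnj (Kunif m t j b))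
      = (\<Sum>t\<in>{..<m} \<times> {..<n}. if i = fst t \<and> j = fst t then c * cnj c * \<rho>$$(snd t, snd t) else 0)"
    unfolding Kunif_def c_def[symmetric] by (intro sum.cong refl unit_kraus) auto
  also have "\<dots> = (\<Sum>s<m. \<Sum>t<n. if i = s \<and> j = s then c * cnj c * \<rho>$$(t, t) else 0)"
    by (rule sum_prod_fs)
  also have "\<dots> = (\<Sum>s<m. if s = i then (if i = j then (\<Sum>t<n. c * cnj c * \<rho>$$(t, t)) else 0) else 0)"
    by (intro sum.cong refl) auto
  also have "\<dots> = (if i = j then c * cnj c * (\<Sum>t<n. \<rho>$$(t, t)) else 0)"
    using ij by (simp add: sum_distrib_left)
  also have "\<dots> = (if i = j then (\<Sum>t<n. \<rho>$$(t, t)) / of_nat m else 0)"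
    using cnj_c_m[OF m] unfolding c_def by simp
  also have "\<dots> = unif m \<rho> $$ (i,j)" unfolding unif_def ctrace_def using ij \<rho> by simp
  finally show "unif m \<rho> $$ (i,j) = (\<Sum>t\<in>{..<m} \<times> {..<n}. \<Sum>a<n. \<Sum>b<n. Kunif m t i a * \<rho> $$ (a, b) * cnj (Kunif m t j b))"
    by simp
qed

lemma unif_channel:
  assumes m: "m > 0"
  shows "quantum_channel n m (unif m)"
proof -
  have kf: "kraus_form n m ({..<m} \<times> {..<n}) (Kunif m) (unif m)" by (rule unif_kraus[OF m])
  have tp: "trace_preserving n (unif m)"
  proof (rule kraus_tp[OF kf])
    fix a b assume ab: "a < n" "b < n"
    define c where "c = complex_of_real (1 / sqrt (real m))"
    have "(\<Sum>t\<in>{..<m} \<times> {..<n}. \<Sum>i<m. cnj (Kunif m t i b) * Kunif m t i a)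
       = (\<Sum>t\<in>{..<m} \<times> {..<n}. if a = snd t \<and> b = snd t then cnj c * c else 0)"
      unfolding Kunif_def c_def[symmetric] by (intro sum.cong refl unit_compl) auto
    also have "\<dots> = (\<Sum>s<m. \<Sum>t<n. if a = t \<and> b = t then cnj c * c else 0)"
      by (rule sum_prod_fs)
    also have "\<dots> = (\<Sum>s<m. if a = b then cnj c * c else 0)"
    proof (rule sum.cong[OF refl])
      fix s
      have "(\<Sum>t<n. if a = t \<and> b = t then cnj c * c else 0) = (\<Sum>t<n. if t = a then (if a = b then cnj c * c else 0) else 0)"
        by (intro sum.cong refl) auto
      then show "(\<Sum>t<n. if a = t \<and> b = t then cnj c * c else 0) = (if a = b then cnj c * c else 0)"
        using ab by simp
    qed
    also have "\<dots> = (if a = b then 1 else 0)"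
      using m cnj_c_m[OF m] unfolding c_def by (simp add: mult.commute)
    finally show "(\<Sum>t\<in>{..<m} \<times> {..<n}. \<Sum>i<m. cnj (Kunif m t i b) * Kunif m t i a) = (if a = b then 1 else 0)" .
  qed
  show ?thesis unfolding quantum_channel_def
    using kraus_lin[OF kf] kraus_cp[OF kf] tp by simp
qed

lemma ctrace_dephase: "A \<in> carrier_mat n n \<Longrightarrow> ctrace (dephase A) = ctrace A"
  unfolding ctrace_def dephase_def by simp

lemma unif_DI:
  assumes m: "m > 0"
  shows "unif m \<in> DI_channels n m"
proof -
  have "\<forall>A\<in>carrier_mat n n. unif m (dephase A) = unif m A" by (auto simp: unif_def ctrace_dephase)
  then show ?thesis unfolding DI_channels_def detection_incoherent_def using unif_channel[OF m] by simp
qed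


definition Kdep :: "nat \<Rightarrow> nat \<Rightarrow> nat \<Rightarrow> complex" where
  "Kdep t i a = (if i = t \<and> a = t then 1 else 0)"

lemma dephase_kraus: "kraus_form n n {..<n} Kdep dephase"
  unfolding kraus_form_def
proof (intro ballI conjI allI impI)
  fix \<rho> :: "complex mat" assume \<rho>: "\<rho> \<in> carrier_mat n n"
  show "dephase \<rho> \<in> carrier_mat n n" using \<rho> dephase_carrier[of \<rho>] by simp
  fix i j assume ij: "i < n" "j < n"
  have "(\<Sum>t<n. \<Sum>a<n. \<Sum>b<n. Kdep t i a * \<rho> $$ (a, b) * cnj (Kdep t j b))
      = (\<Sum>t<n. if i = t \<and> j = t then 1 * cnj 1 * \<rho>$$(t, t) else 0)"
    unfolding Kdep_def by (intro sum.cong refl unit_kraus) auto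
  also have "\<dots> = (\<Sum>t<n. if t = i then (if i = j then \<rho>$$(i,i) else 0) else 0)"
    by (intro sum.cong refl) auto
  also have "\<dots> = dephase \<rho> $$ (i,j)" using ij \<rho> by (simp add: dephase_def)
  finally show "dephase \<rho> $$ (i,j) = (\<Sum>t<n. \<Sum>a<n. \<Sum>b<n. Kdep t i a * \<rho> $$ (a, b) * cnj (Kdep t j b))"
    by simp
qed

lemma dephase_idem: "A \<in> carrier_mat n n \<Longrightarrow> dephase (dephase A) = dephase A"
  by (intro eq_matI) (auto simp: dephase_def)

lemma comp_dephase_DI:
  assumes Q: "quantum_channel n m \<Theta>"
  shows "(\<Theta> \<circ> dephase) \<in> DI_channels n m"
proof -
  have kf: "kraus_form n n {..<n} Kdep dephase" by (rule dephase_kraus)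
  have dc: "dephase A \<in> carrier_mat n n" if "A \<in> carrier_mat n n" for A
    using that dephase_carrier[of A] by simp
  have lin: "lin_map n m (\<Theta> \<circ> dephase)"
  proof -
    have l1: "lin_map n n dephase" by (rule kraus_lin[OF kf])
    have l2: "lin_map n m \<Theta>" using Q unfolding quantum_channel_def by simp
    show ?thesis using l1 l2 dc unfolding lin_map_def by simp
  qed
  have cp: "completely_positive n m (\<Theta> \<circ> dephase)"
    using cp_comp[OF _ kf] Q unfolding quantum_channel_def by simp
  have tp: "trace_preserving n (\<Theta> \<circ> dephase)"
    using Q dc ctrace_dephase unfolding quantum_channel_def trace_preserving_def by simp
  have di: "detection_incoherent n (\<Theta> \<circ> dephase)"
    unfolding detection_incoherent_def using dephase_idem by simp
  show ?thesis unfolding DI_channels_def quantum_channel_def using lin cp tp di by simp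
qed



lemma l1_two:
  assumes "quantum_channel n m \<Theta>" "quantum_channel n m \<Phi>" "\<psi> \<in> unit_vecs_c n" "\<phi> \<in> unit_vecs_c n"
  shows "(\<Sum>i<m. cmod (\<Theta> (proj \<psi>) $$ (i,i) - \<Phi> (proj \<phi>) $$ (i,i))) \<le> 2"
proof -
  have "(\<Sum>i<m. cmod (\<Theta> (proj \<psi>) $$ (i,i) - \<Phi> (proj \<phi>) $$ (i,i))) \<le> (\<Sum>i<m. cmod (\<Theta> (proj \<psi>) $$ (i,i)) + cmod (\<Phi> (proj \<phi>) $$ (i,i)))"
    by (intro sum_mono norm_triangle_ineq4)
  also have "\<dots> = (\<Sum>i<m. Re (\<Theta> (proj \<psi>) $$ (i,i)) + Re (\<Phi> (proj \<phi>) $$ (i,i)))"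
    using diag_prob(1)[OF assms(1,3)] diag_prob(1)[OF assms(2,4)] by (intro sum.cong refl) (simp add: prob_cmod)
  also have "\<dots> = 2" using diag_prob(2)[OF assms(1,3)] diag_prob(2)[OF assms(2,4)]
    by (simp add: sum.distrib flip: Re_sum)
  finally show ?thesis .
qed

lemma real_bound:
  fixes p :: "nat \<Rightarrow> real"
  assumes m: "m > 0" and p: "\<And>i. i < m \<Longrightarrow> p i \<ge> 0" and s: "(\<Sum>i<m. p i) = 1"
  shows "(\<Sum>i<m. \<bar>p i - 1 / real m\<bar>) \<le> 2 * (real m - 1) / real m"
proof -
  have ab: "\<bar>x - c\<bar> = x + c - 2 * min x c" for x c :: real by (simp add: min_def abs_if)
  have "(\<Sum>i<m. \<bar>p i - 1 / real m\<bar>) = (\<Sum>i<m. p i) + (\<Sum>i<m. 1 / real m) - 2 * (\<Sum>i<m. min (p i) (1 / real m))"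
    unfolding ab by (simp add: sum.distrib sum_subtractf sum_distrib_left)
  also have "\<dots> = 2 - 2 * (\<Sum>i<m. min (p i) (1 / real m))" using s m by simp
  finally have e: "(\<Sum>i<m. \<bar>p i - 1 / real m\<bar>) = 2 - 2 * (\<Sum>i<m. min (p i) (1 / real m))" .
  have "(\<Sum>i<m. min (p i) (1 / real m)) \<ge> 1 / real m"
  proof (cases "\<exists>i<m. p i \<ge> 1 / real m")
    case True
    then obtain i where i: "i < m" "p i \<ge> 1 / real m" by auto
    have "1 / real m = min (p i) (1 / real m)" using i by simp
    also have "\<dots> \<le> (\<Sum>i<m. min (p i) (1 / real m))"
      using i p m by (intro member_le_sum) auto
    finally show ?thesis .
  next
    case False
    then have "(\<Sum>i<m. min (p i) (1 / real m)) = (\<Sum>i<m. p i)" by (intro sum.cong) auto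
    then show ?thesis using s m by (simp add: field_simps)
  qed
  then have "(\<Sum>i<m. \<bar>p i - 1 / real m\<bar>) \<le> 2 - 2 / real m" unfolding e by simp
  also have "\<dots> = 2 * (real m - 1) / real m" using m by (simp add: field_simps)
  finally show ?thesis .
qed

lemma bound_unif:
  assumes Q: "quantum_channel n m \<Theta>" and m: "m > 0" and u: "\<psi> \<in> unit_vecs_c n"
  shows "gdist n m \<Theta> (unif m) \<psi> \<le> 2 * (real m - 1) / real m"
proof -
  have c: "\<psi> \<in> carrier_vec n" using u unfolding unit_vecs_c_def by auto
  have "gdist n m \<Theta> (unif m) \<psi> = (\<Sum>i<m. cmod (\<Theta> (proj \<psi>) $$ (i,i) - unif m (proj \<psi>) $$ (i,i)))"
    by (rule gdist_formula[OF Q unif_channel[OF m] u])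
  also have "\<dots> = (\<Sum>i<m. \<bar>Re (\<Theta> (proj \<psi>) $$ (i,i)) - 1 / real m\<bar>)"
  proof (rule sum.cong[OF refl])
    fix i assume "i \<in> {..<m}"
    then have i: "i < m" by simp
    have un: "unif m (proj \<psi>) $$ (i,i) = complex_of_real (1 / real m)" using i unit_ctrace[OF u] unfolding unif_def by simp
    have im: "Im (\<Theta> (proj \<psi>) $$ (i,i)) = 0" using diag_prob(1)[OF Q u i] by simp
    show "cmod (\<Theta> (proj \<psi>) $$ (i,i) - unif m (proj \<psi>) $$ (i,i)) = \<bar>Re (\<Theta> (proj \<psi>) $$ (i,i)) - 1 / real m\<bar>"
      unfolding un using im by (simp add: cmod_def)
  qed
  also have "\<dots> \<le> 2 * (real m - 1) / real m"
  proof (rule real_bound[OF m])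
    show "\<And>i. i < m \<Longrightarrow> 0 \<le> Re (\<Theta> (proj \<psi>) $$ (i, i))" using diag_prob(1)[OF Q u] by simp
    show "(\<Sum>i<m. Re (\<Theta> (proj \<psi>) $$ (i, i))) = 1" using diag_prob(2)[OF Q u] by (simp flip: Re_sum)
  qed
  finally show ?thesis .
qed


definition phase :: "nat \<Rightarrow> nat \<Rightarrow> complex vec \<Rightarrow> complex vec" where
  "phase n k \<psi> = vec n (\<lambda>j. exp (2 * pi * \<i> * of_nat (k * j) / of_nat n) * \<psi> $ j)"

lemma cmod_e: "cmod (exp (2 * pi * \<i> * of_nat x / of_nat N)) = 1"
  unfolding e_cis by simp

lemma phase_unit:
  assumes u: "\<psi> \<in> unit_vecs_c n"
  shows "phase n k \<psi> \<in> unit_vecs_c n"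
  using u unfolding unit_vecs_c_def phase_def by (simp add: norm_mult cmod_e)

lemma phase0: "\<psi> \<in> carrier_vec n \<Longrightarrow> phase n 0 \<psi> = \<psi>"
  unfolding phase_def by (intro eq_vecI) auto

fun msum :: "nat \<Rightarrow> (nat \<Rightarrow> complex mat) \<Rightarrow> nat \<Rightarrow> complex mat" where
  "msum d A 0 = 0\<^sub>m d d"
| "msum d A (Suc k) = msum d A k + A k"

lemma msum_carrier: "(\<And>k. A k \<in> carrier_mat d d) \<Longrightarrow> msum d A K \<in> carrier_mat d d"
  by (induction K) auto

lemma msum_index:
  assumes "\<And>k. A k \<in> carrier_mat d d" "i < d" "j < d"
  shows "msum d A K $$ (i,j) = (\<Sum>k<K. A k $$ (i,j))"
proof (induction K)
  case 0 then show ?case using assms by simp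
next
  case (Suc K)
  have "msum d A K \<in> carrier_mat d d" using msum_carrier assms(1) by blast
  moreover have "A K \<in> carrier_mat d d" using assms(1) .
  ultimately show ?case using Suc assms(2,3) by simp
qed

lemma lin_zero:
  assumes "lin_map n m \<Theta>"
  shows "\<Theta> (0\<^sub>m n n) = 0\<^sub>m m m"
proof -
  have c: "\<Theta> (0\<^sub>m n n) \<in> carrier_mat m m" using assms unfolding lin_map_def by auto
  have "\<Theta> (0\<^sub>m n n) = \<Theta> (0 \<cdot>\<^sub>m 0\<^sub>m n n)" by (intro arg_cong[where f=\<Theta>] eq_matI) auto
  also have "\<dots> = 0 \<cdot>\<^sub>m \<Theta> (0\<^sub>m n n)"
    using assms zero_carrier_mat[of n n] unfolding lin_map_def by blast
  also have "\<dots> = 0\<^sub>m m m" using c by (intro eq_matI) auto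
  finally show ?thesis .
qed

lemma lin_msum:
  assumes L: "lin_map n m \<Theta>" and A: "\<And>k. A k \<in> carrier_mat n n"
  shows "\<Theta> (msum n A K) = msum m (\<lambda>k. \<Theta> (A k)) K"
proof (induction K)
  case 0 then show ?case using lin_zero[OF L] by simp
next
  case (Suc K)
  have "msum n A K \<in> carrier_mat n n" using msum_carrier A by blast
  then show ?case using Suc L A unfolding lin_map_def by simp
qed

lemma dephase_decomp:
  assumes n: "n > 0" and c: "\<psi> \<in> carrier_vec n"
  shows "dephase (proj \<psi>) = (1 / of_nat n) \<cdot>\<^sub>m msum n (\<lambda>k. proj (phase n k \<psi>)) n"
proof -
  define e where "e k i = exp (2 * pi * \<i> * of_nat (k * i) / of_nat n)" for k i
  have pc: "\<And>k. proj (phase n k \<psi>) \<in> carrier_mat n n" unfolding phase_def by simp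
  have mc: "msum n (\<lambda>k. proj (phase n k \<psi>)) n \<in> carrier_mat n n" by (rule msum_carrier[of "\<lambda>k. proj (phase n k \<psi>)", OF pc])
  have dc: "dephase (proj \<psi>) \<in> carrier_mat n n" using c dephase_carrier[of "proj \<psi>"] by simp
  show ?thesis
  proof (rule eq_matI)
    fix i j assume "i < dim_row ((1 / of_nat n) \<cdot>\<^sub>m msum n (\<lambda>k. proj (phase n k \<psi>)) n)"
      "j < dim_col ((1 / of_nat n) \<cdot>\<^sub>m msum n (\<lambda>k. proj (phase n k \<psi>)) n)"
    then have ij: "i < n" "j < n" using mc by auto
    have pk: "proj (phase n k \<psi>) $$ (i,j) = \<psi> $ i * cnj (\<psi> $ j) * (e k i * cnj (e k j))" for k
    proof -
      have "proj (phase n k \<psi>) $$ (i,j) = (e k i * \<psi> $ i) * cnj (e k j * \<psi> $ j)"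
        using ij unfolding phase_def e_def by simp
      then show ?thesis by (simp only: complex_cnj_mult mult_ac)
    qed
    have "((1 / of_nat n) \<cdot>\<^sub>m msum n (\<lambda>k. proj (phase n k \<psi>)) n) $$ (i,j)
        = (1 / of_nat n) * (\<Sum>k<n. proj (phase n k \<psi>) $$ (i,j))"
      using ij mc msum_index[OF pc ij] by simp
    also have "\<dots> = (1 / of_nat n) * (\<psi> $ i * cnj (\<psi> $ j) * (\<Sum>k<n. e k i * cnj (e k j)))"
      unfolding pk sum_distrib_left ..
    also have "(\<Sum>k<n. e k i * cnj (e k j)) = (if i = j then of_nat n else 0)"
      unfolding e_def by (rule expsum[OF n ij])
    finally have "((1 / of_nat n) \<cdot>\<^sub>m msum n (\<lambda>k. proj (phase n k \<psi>)) n) $$ (i,j)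
       = (if i = j then \<psi> $ i * cnj (\<psi> $ i) else 0)" using n by simp
    also have "\<dots> = dephase (proj \<psi>) $$ (i,j)" using ij c by (simp add: dephase_def)
    finally show "dephase (proj \<psi>) $$ (i,j) = ((1 / of_nat n) \<cdot>\<^sub>m msum n (\<lambda>k. proj (phase n k \<psi>)) n) $$ (i,j)"
      by simp
  next
    show "dim_row (dephase (proj \<psi>)) = dim_row ((1 / of_nat n) \<cdot>\<^sub>m msum n (\<lambda>k. proj (phase n k \<psi>)) n)"
      using mc dc by simp
    show "dim_col (dephase (proj \<psi>)) = dim_col ((1 / of_nat n) \<cdot>\<^sub>m msum n (\<lambda>k. proj (phase n k \<psi>)) n)"
      using mc dc by simp
  qed
qed

lemma sum_if0: "(\<Sum>k<n. if k = 0 then 0 else (2::real)) = 2 * real (n - 1)"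
  by (induction n) (auto simp: of_nat_diff)

lemma bound_deph:
  assumes Q: "quantum_channel n m \<Theta>" and n: "n > 0" and u: "\<psi> \<in> unit_vecs_c n"
  shows "gdist n m \<Theta> (\<Theta> \<circ> dephase) \<psi> \<le> 2 * (real n - 1) / real n"
proof -
  have c: "\<psi> \<in> carrier_vec n" using u unfolding unit_vecs_c_def by auto
  have L: "lin_map n m \<Theta>" using Q unfolding quantum_channel_def by simp
  have pc: "\<And>k. proj (phase n k \<psi>) \<in> carrier_mat n n" unfolding phase_def by simp
  have mc: "msum n (\<lambda>k. proj (phase n k \<psi>)) n \<in> carrier_mat n n"
    by (rule msum_carrier[of "\<lambda>k. proj (phase n k \<psi>)", OF pc])
  have Qc: "\<And>k. \<Theta> (proj (phase n k \<psi>)) \<in> carrier_mat m m" using channel_carrier[OF Q pc] .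
  define p where "p i = \<Theta> (proj \<psi>) $$ (i,i)" for i
  define q where "q k i = \<Theta> (proj (phase n k \<psi>)) $$ (i,i)" for k i
  have QD: "(\<Theta> \<circ> dephase) (proj \<psi>) $$ (i,i) = (1 / of_nat n) * (\<Sum>k<n. q k i)" if i: "i < m" for i
  proof -
    have "(\<Theta> \<circ> dephase) (proj \<psi>) = (1 / of_nat n) \<cdot>\<^sub>m \<Theta> (msum n (\<lambda>k. proj (phase n k \<psi>)) n)"
      using dephase_decomp[OF n c] L mc unfolding lin_map_def by simp
    also have "\<dots> = (1 / of_nat n) \<cdot>\<^sub>m msum m (\<lambda>k. \<Theta> (proj (phase n k \<psi>))) n"
      using lin_msum[of n m \<Theta> "\<lambda>k. proj (phase n k \<psi>)", OF L pc] by simp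
    finally have e: "(\<Theta> \<circ> dephase) (proj \<psi>) = (1 / of_nat n) \<cdot>\<^sub>m msum m (\<lambda>k. \<Theta> (proj (phase n k \<psi>))) n" .
    have mc2: "msum m (\<lambda>k. \<Theta> (proj (phase n k \<psi>))) n \<in> carrier_mat m m"
      by (rule msum_carrier[of "\<lambda>k. \<Theta> (proj (phase n k \<psi>))", OF Qc])
    show ?thesis unfolding e
      using msum_index[of "\<lambda>k. \<Theta> (proj (phase n k \<psi>))", OF Qc i i] mc2 i unfolding q_def by simp
  qed
  have "gdist n m \<Theta> (\<Theta> \<circ> dephase) \<psi> = (\<Sum>i<m. cmod (p i - (1 / of_nat n) * (\<Sum>k<n. q k i)))"
    unfolding gdist_formula[OF Q comp_dephase_DI[OF Q, THEN DI_channel] u] p_def using QD by simp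
  also have "\<dots> = (\<Sum>i<m. cmod ((1 / of_nat n) * (\<Sum>k<n. p i - q k i)))"
  proof (rule sum.cong[OF refl])
    fix i
    have "(1 / of_nat n) * (\<Sum>k<n. p i - q k i) = (1 / of_nat n) * (of_nat n * p i) - (1 / of_nat n) * (\<Sum>k<n. q k i)"
      by (simp add: sum_subtractf right_diff_distrib)
    also have "(1 / of_nat n) * (of_nat n * p i) = p i" using n by simp
    finally show "cmod (p i - (1 / of_nat n) * (\<Sum>k<n. q k i)) = cmod ((1 / of_nat n) * (\<Sum>k<n. p i - q k i))" by simp
  qed
  also have "\<dots> \<le> (\<Sum>i<m. (1 / real n) * (\<Sum>k<n. cmod (p i - q k i)))"
  proof (rule sum_mono)
    fix i
    have "cmod ((1 / of_nat n) * (\<Sum>k<n. p i - q k i)) = (1 / real n) * cmod (\<Sum>k<n. p i - q k i)"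
      by (simp add: norm_mult norm_divide)
    also have "\<dots> \<le> (1 / real n) * (\<Sum>k<n. cmod (p i - q k i))"
      by (intro mult_left_mono norm_sum) simp
    finally show "cmod ((1 / of_nat n) * (\<Sum>k<n. p i - q k i)) \<le> (1 / real n) * (\<Sum>k<n. cmod (p i - q k i))" .
  qed
  also have "\<dots> = (1 / real n) * (\<Sum>k<n. \<Sum>i<m. cmod (p i - q k i))"
    unfolding sum_distrib_left[symmetric] by (rule arg_cong[where f="\<lambda>x. (1 / real n) * x"], rule sum.swap)
  also have "\<dots> \<le> (1 / real n) * (\<Sum>k<n. if k = 0 then 0 else 2)"
  proof (intro mult_left_mono sum_mono)
    fix k assume "k \<in> {..<n}"
    show "(\<Sum>i<m. cmod (p i - q k i)) \<le> (if k = 0 then 0 else 2)"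
    proof (cases "k = 0")
      case True
      then show ?thesis unfolding p_def q_def using phase0[OF c] by simp
    next
      case False
      then show ?thesis unfolding p_def q_def using l1_two[OF Q Q u phase_unit[OF u]] by simp
    qed
  qed simp
  also have "\<dots> = 2 * (real n - 1) / real n" unfolding sum_if0 using n by (simp add: of_nat_diff)
  finally show ?thesis .
qed

lemma first_conj:
  assumes n: "n \<ge> 1" and m: "m \<ge> 1" and Q: "quantum_channel n m \<Theta>"
  shows "M_tilde_diamond n m \<Theta> \<le> 2 * (real (min n m) - 1) / real (min n m)"
proof (cases "m \<le> n")
  case True
  then have "min n m = m" by simp
  moreover have "M_tilde_diamond n m \<Theta> \<le> 2 * (real m - 1) / real m"
    using M_upper[OF n Q unif_DI] bound_unif[OF Q] m by simp
  ultimately show ?thesis by simp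
next
  case False
  then have "min n m = n" by simp
  moreover have "M_tilde_diamond n m \<Theta> \<le> 2 * (real n - 1) / real n"
    using M_upper[OF n Q comp_dephase_DI[OF Q]] bound_deph[OF Q] n by simp
  ultimately show ?thesis by simp
qed



lemma fourier_carrier[simp]: "fourier_mat N \<in> carrier_mat N N"
  unfolding fourier_mat_def by simp

lemma fourier_entry: "a < N \<Longrightarrow> k < N \<Longrightarrow> fourier_mat N $$ (a,k) =
   exp (2 * pi * \<i> * of_nat (a * k) / of_nat N) / complex_of_real (sqrt (real N))"
  unfolding fourier_mat_def by simp

lemma fourier_sym: "a < N \<Longrightarrow> k < N \<Longrightarrow> fourier_mat N $$ (a,k) = fourier_mat N $$ (k,a)"
  by (simp add: fourier_entry mult.commute)

lemma sqrtN: "N > 0 \<Longrightarrow> complex_of_real (sqrt (real N)) * cnj (complex_of_real (sqrt (real N))) = of_nat N"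
  by (simp flip: of_real_mult)

lemma fourier_orth:
  assumes N: "N > 0" and jk: "j < N" "k < N"
  shows "(\<Sum>a<N. cnj (fourier_mat N $$ (a,j)) * fourier_mat N $$ (a,k)) = (if j = k then 1 else 0)"
proof -
  define s where "s = complex_of_real (sqrt (real N))"
  have s0: "s \<noteq> 0" unfolding s_def using N by simp
  have "(\<Sum>a<N. cnj (fourier_mat N $$ (a,j)) * fourier_mat N $$ (a,k))
     = (\<Sum>a<N. exp (2 * pi * \<i> * of_nat (a * k) / of_nat N) * cnj (exp (2 * pi * \<i> * of_nat (a * j) / of_nat N))) / (s * cnj s)"
    unfolding sum_divide_distrib using jk
    by (intro sum.cong refl) (simp add: fourier_entry s_def[symmetric] field_simps)
  also have "\<dots> = (if k = j then of_nat N else 0) / of_nat N"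
    unfolding expsum[OF N jk(2) jk(1)] s_def sqrtN[OF N] ..
  also have "\<dots> = (if j = k then 1 else 0)" using N by auto
  finally show ?thesis .
qed

lemma fourier_orth2:
  assumes N: "N > 0" and jk: "j < N" "k < N"
  shows "(\<Sum>a<N. fourier_mat N $$ (j,a) * cnj (fourier_mat N $$ (k,a))) = (if j = k then 1 else 0)"
proof -
  have "(\<Sum>a<N. fourier_mat N $$ (j,a) * cnj (fourier_mat N $$ (k,a))) = cnj (\<Sum>a<N. cnj (fourier_mat N $$ (a,j)) * fourier_mat N $$ (a,k))"
    unfolding cnj_sum using jk by (intro sum.cong refl) (simp add: fourier_sym mult.commute)
  then show ?thesis using fourier_orth[OF assms] by simp
qed

lemma fourier_abs: "N > 0 \<Longrightarrow> a < N \<Longrightarrow> k < N \<Longrightarrow> (cmod (fourier_mat N $$ (a,k)))\<^sup>2 = 1 / real N"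
  by (simp add: fourier_entry norm_divide cmod_e power_divide)

lemma embed_dims[simp]: "dim_row (Defs.embed d N) = d" "dim_col (Defs.embed d N) = N"
  unfolding embed_def by simp_all

lemma fourier_dims[simp]: "dim_row (fourier_mat N) = N" "dim_col (fourier_mat N) = N"
  unfolding fourier_mat_def by simp_all

lemma embed_carrier[simp]: "Defs.embed d N \<in> carrier_mat d N"
  unfolding embed_def by simp

lemma sum_trunc:
  fixes N m :: nat
  assumes "N \<le> m"
  shows "(\<Sum>i<m. if i < N then f i else 0) = (\<Sum>i<N. f i)"
proof -
  have "(\<Sum>i<m. if i < N then f i else 0) = (\<Sum>i\<in>{..<m} \<inter> {i. i < N}. f i)"
    by (subst sum.inter_restrict) auto
  also have "{..<m} \<inter> {i. i < N} = {..<N}" using assms by auto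
  finally show ?thesis .
qed

lemma embed_F:
  assumes N: "N \<le> d"
  shows "Defs.embed d N * fourier_mat N = mat d N (\<lambda>(a,t). if a < N then fourier_mat N $$ (a,t) else 0)"
proof (rule eq_matI)
  fix a t assume "a < dim_row (mat d N (\<lambda>(a,t). if a < N then fourier_mat N $$ (a,t) else 0))"
    "t < dim_col (mat d N (\<lambda>(a,t). if a < N then fourier_mat N $$ (a,t) else 0))"
  then have at: "a < d" "t < N" by auto
  have "(Defs.embed d N * fourier_mat N) $$ (a,t) = (\<Sum>l<N. (if a = l then 1 else 0) * fourier_mat N $$ (l,t))"
    using at by (subst mult_entry[of _ d N _ N]) (auto simp: embed_def)
  also have "\<dots> = (if a < N then fourier_mat N $$ (a,t) else 0)"
  proof (cases "a < N")
    case True then show ?thesis using dl_sums(1)[OF True, of "\<lambda>_. 1"] by simp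
  next
    case False
    then have "(\<Sum>l<N. (if a = l then 1 else 0) * fourier_mat N $$ (l,t)) = (\<Sum>l<N. 0)" by (intro sum.cong) auto
    then show ?thesis using False by simp
  qed
  finally show "(Defs.embed d N * fourier_mat N) $$ (a,t) = mat d N (\<lambda>(a,t). if a < N then fourier_mat N $$ (a,t) else 0) $$ (a,t)"
    using at by simp
qed auto

lemma V_eq:
  assumes N: "N \<le> m" "N \<le> n"
  shows "Defs.embed m N * fourier_mat N * adj (Defs.embed n N) = mat m n (\<lambda>(i,a). if i < N \<and> a < N then fourier_mat N $$ (i,a) else 0)"
proof (rule eq_matI)
  fix i a assume "i < dim_row (mat m n (\<lambda>(i,a). if i < N \<and> a < N then fourier_mat N $$ (i,a) else 0))"
    "a < dim_col (mat m n (\<lambda>(i,a). if i < N \<and> a < N then fourier_mat N $$ (i,a) else 0))"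
  then have ia: "i < m" "a < n" by auto
  have c1: "Defs.embed m N * fourier_mat N \<in> carrier_mat m N" by (rule mult_carrier_mat[OF embed_carrier fourier_carrier])
  have "(Defs.embed m N * fourier_mat N * adj (Defs.embed n N)) $$ (i,a) =
     (\<Sum>l<N. (Defs.embed m N * fourier_mat N) $$ (i,l) * adj (Defs.embed n N) $$ (l,a))"
    using ia c1 by (subst mult_entry[of _ m N _ n]) (auto simp: adj_def embed_def)
  also have "\<dots> = (\<Sum>l<N. (if i < N then fourier_mat N $$ (i,l) else 0) * (if a = l then 1 else 0))"
    using ia unfolding embed_F[OF N(1)] by (intro sum.cong refl) (auto simp: adj_def embed_def)
  also have "\<dots> = (if i < N \<and> a < N then fourier_mat N $$ (i,a) else 0)"
  proof (cases "a < N")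
    case True then show ?thesis using dl_sums(3)[OF True, of "\<lambda>l. if i < N then fourier_mat N $$ (i,l) else 0" "\<lambda>_. 1"] by simp
  next
    case False
    then have "(\<Sum>l<N. (if i < N then fourier_mat N $$ (i,l) else 0) * (if a = l then 1 else 0)) = (\<Sum>l<N. 0)" by (intro sum.cong) auto
    then show ?thesis using False by simp
  qed
  finally show "(Defs.embed m N * fourier_mat N * adj (Defs.embed n N)) $$ (i,a) = mat m n (\<lambda>(i,a). if i < N \<and> a < N then fourier_mat N $$ (i,a) else 0) $$ (i,a)"
    using ia by simp
qed auto



lemma sandwich_entry:
  assumes V: "V \<in> carrier_mat m n" and \<rho>: "\<rho> \<in> carrier_mat n n" and ij: "i < m" "j < m"
  shows "(V * \<rho> * adj V) $$ (i,j) = (\<Sum>a<n. \<Sum>b<n. V $$ (i,a) * \<rho> $$ (a,b) * cnj (V $$ (j,b)))"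
proof -
  have c1: "V * \<rho> \<in> carrier_mat m n" using V \<rho> by simp
  have c2: "adj V \<in> carrier_mat n m" using V adj_carrier[of V] by simp
  have "(V * \<rho> * adj V) $$ (i,j) = (\<Sum>b<n. (V * \<rho>) $$ (i,b) * adj V $$ (b,j))"
    by (rule mult_entry[OF c1 c2 ij])
  also have "\<dots> = (\<Sum>b<n. (\<Sum>a<n. V $$ (i,a) * \<rho> $$ (a,b)) * cnj (V $$ (j,b)))"
  proof (rule sum.cong[OF refl])
    fix b assume "b \<in> {..<n}"
    then have b: "b < n" by simp
    have "(V * \<rho>) $$ (i,b) = (\<Sum>a<n. V $$ (i,a) * \<rho> $$ (a,b))" by (rule mult_entry[OF V \<rho> ij(1) b])
    moreover have "adj V $$ (b,j) = cnj (V $$ (j,b))" using V b ij by simp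
    ultimately show "(V * \<rho>) $$ (i,b) * adj V $$ (b,j) = (\<Sum>a<n. V $$ (i,a) * \<rho> $$ (a,b)) * cnj (V $$ (j,b))" by simp
  qed
  also have "\<dots> = (\<Sum>b<n. \<Sum>a<n. V $$ (i,a) * \<rho> $$ (a,b) * cnj (V $$ (j,b)))"
    by (simp add: sum_distrib_right)
  also have "\<dots> = (\<Sum>a<n. \<Sum>b<n. V $$ (i,a) * \<rho> $$ (a,b) * cnj (V $$ (j,b)))"
    by (rule sum.swap)
  finally show ?thesis .
qed

lemma sum_opt: "(\<Sum>t\<in>insert None (Some ` S). g t) = g None + (\<Sum>s\<in>S. g (Some s))" if "finite S"
  using that by (simp add: sum.reindex)

lemma ow_entry:
  assumes \<rho>: "\<rho> \<in> carrier_mat n n" and ij: "i < m" "j < m"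
  shows "(outside_weight n N \<rho> \<cdot>\<^sub>m ket0bra0 m) $$ (i,j) =
     (\<Sum>s\<in>{N..<n}. \<Sum>a<n. \<Sum>b<n. (if i = 0 \<and> a = s then 1 else 0) * \<rho> $$ (a,b) * cnj (if j = 0 \<and> b = s then 1 else 0))"
proof -
  have "(\<Sum>s\<in>{N..<n}. \<Sum>a<n. \<Sum>b<n. (if i = 0 \<and> a = s then 1 else 0) * \<rho> $$ (a,b) * cnj (if j = 0 \<and> b = s then 1 else 0))
     = (\<Sum>s\<in>{N..<n}. if i = 0 \<and> j = 0 then 1 * cnj 1 * \<rho> $$ (s,s) else 0)"
    by (intro sum.cong refl unit_kraus) auto
  also have "\<dots> = (outside_weight n N \<rho> \<cdot>\<^sub>m ket0bra0 m) $$ (i,j)"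
    using ij unfolding outside_weight_def ket0bra0_def by simp
  finally show ?thesis by simp
qed

definition Kfc :: "nat \<Rightarrow> nat option \<Rightarrow> nat \<Rightarrow> nat \<Rightarrow> complex" where
  "Kfc N t i a = (case t of None \<Rightarrow> (if i < N \<and> a < N then fourier_mat N $$ (i,a) else 0)
                  | Some s \<Rightarrow> (if i = 0 \<and> a = s then 1 else 0))"

lemma fc_kraus:
  assumes n: "n \<ge> 1" and m: "m \<ge> 1"
  shows "kraus_form n m (insert None (Some ` {min n m..<n})) (Kfc (min n m)) (fourier_channel n m)"
  unfolding kraus_form_def
proof (intro ballI conjI allI impI)
  define N where "N = min n m"
  have Nm: "N \<le> m" "N \<le> n" unfolding N_def by auto
  define V where "V = mat m n (\<lambda>(i,a). if i < N \<and> a < N then fourier_mat N $$ (i,a) else 0)"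
  have Vc: "V \<in> carrier_mat m n" unfolding V_def by simp
  have fc: "fourier_channel n m \<rho> = V * \<rho> * adj V + outside_weight n N \<rho> \<cdot>\<^sub>m ket0bra0 m" for \<rho>
    unfolding fourier_channel_def Let_def N_def[symmetric] V_def V_eq[OF Nm] ..
  fix \<rho> :: "complex mat" assume \<rho>: "\<rho> \<in> carrier_mat n n"
  show "fourier_channel n m \<rho> \<in> carrier_mat m m" unfolding fc using Vc \<rho> by (simp add: ket0bra0_def)
  fix i j assume ij: "i < m" "j < m"
  have "fourier_channel n m \<rho> $$ (i,j) = (V * \<rho> * adj V) $$ (i,j) + (outside_weight n N \<rho> \<cdot>\<^sub>m ket0bra0 m) $$ (i,j)"
    unfolding fc using Vc \<rho> ij by (simp add: ket0bra0_def)
  also have "\<dots> = (\<Sum>a<n. \<Sum>b<n. Kfc N None i a * \<rho> $$ (a,b) * cnj (Kfc N None j b)) +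
     (\<Sum>s\<in>{N..<n}. \<Sum>a<n. \<Sum>b<n. Kfc N (Some s) i a * \<rho> $$ (a,b) * cnj (Kfc N (Some s) j b))"
    unfolding sandwich_entry[OF Vc \<rho> ij] ow_entry[OF \<rho> ij]
    using ij by (simp add: V_def Kfc_def)
  also have "\<dots> = (\<Sum>t\<in>insert None (Some ` {N..<n}). \<Sum>a<n. \<Sum>b<n. Kfc N t i a * \<rho> $$ (a,b) * cnj (Kfc N t j b))"
    by (rule sum_opt[symmetric], simp)
  finally show "fourier_channel n m \<rho> $$ (i,j) = (\<Sum>t\<in>insert None (Some ` {min n m..<n}). \<Sum>a<n. \<Sum>b<n. Kfc (min n m) t i a * \<rho> $$ (a,b) * cnj (Kfc (min n m) t j b))"
    unfolding N_def .
qed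

lemma fc_channel:
  assumes n: "n \<ge> 1" and m: "m \<ge> 1"
  shows "quantum_channel n m (fourier_channel n m)"
proof -
  define N where "N = min n m"
  have Nm: "N \<le> m" "N \<le> n" "N > 0" unfolding N_def using n m by auto
  have kf: "kraus_form n m (insert None (Some ` {N..<n})) (Kfc N) (fourier_channel n m)"
    unfolding N_def by (rule fc_kraus[OF n m])
  have tp: "trace_preserving n (fourier_channel n m)"
  proof (rule kraus_tp[OF kf])
    fix a b assume ab: "a < n" "b < n"
    have e1: "(\<Sum>i<m. cnj (Kfc N None i b) * Kfc N None i a) = (if a < N \<and> b < N \<and> a = b then 1 else 0)"
    proof -
      have "(\<Sum>i<m. cnj (Kfc N None i b) * Kfc N None i a) =
          (\<Sum>i<m. if i < N then (if a < N \<and> b < N then cnj (fourier_mat N $$ (i,b)) * fourier_mat N $$ (i,a) else 0) else 0)"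
        by (intro sum.cong refl) (auto simp: Kfc_def)
      also have "\<dots> = (\<Sum>i<N. if a < N \<and> b < N then cnj (fourier_mat N $$ (i,b)) * fourier_mat N $$ (i,a) else 0)"
        by (rule sum_trunc[OF Nm(1)])
      also have "\<dots> = (if a < N \<and> b < N then (\<Sum>i<N. cnj (fourier_mat N $$ (i,b)) * fourier_mat N $$ (i,a)) else 0)"
        by (cases "a < N \<and> b < N") auto
      also have "\<dots> = (if a < N \<and> b < N \<and> a = b then 1 else 0)"
        using fourier_orth[OF Nm(3), of b a] by auto
      finally show ?thesis .
    qed
    have e2: "(\<Sum>s\<in>{N..<n}. \<Sum>i<m. cnj (Kfc N (Some s) i b) * Kfc N (Some s) i a) = (if N \<le> a \<and> a = b then 1 else 0)"
    proof -
      have "(\<Sum>s\<in>{N..<n}. \<Sum>i<m. cnj (Kfc N (Some s) i b) * Kfc N (Some s) i a)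
          = (\<Sum>s\<in>{N..<n}. if a = s \<and> b = s then cnj 1 * 1 else 0)"
        unfolding Kfc_def using m by (intro sum.cong refl) (simp add: unit_compl[of 0 m _ _ 1, simplified])
      also have "\<dots> = (\<Sum>s\<in>{N..<n}. if s = a then (if a = b then 1 else 0) else 0)"
        by (intro sum.cong refl) auto
      also have "\<dots> = (if N \<le> a \<and> a = b then 1 else 0)" using ab by auto
      finally show ?thesis .
    qed
    show "(\<Sum>t\<in>insert None (Some ` {N..<n}). \<Sum>i<m. cnj (Kfc N t i b) * Kfc N t i a) = (if a = b then 1 else 0)"
      unfolding sum_opt[OF finite_atLeastLessThan] e1 e2 by auto
  qed
  show ?thesis unfolding quantum_channel_def using kraus_lin[OF kf] kraus_cp[OF kf] tp by simp
qed


definition Fp :: "nat \<Rightarrow> nat \<Rightarrow> nat \<Rightarrow> complex" where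
  "Fp N a s = (if a < N then fourier_mat N $$ (a,s) else 0)"

definition Kfm :: "nat \<Rightarrow> nat + nat \<Rightarrow> nat \<Rightarrow> nat \<Rightarrow> complex" where
  "Kfm N t i a = (case t of Inl s \<Rightarrow> (if i = s then cnj (Fp N a s) else 0)
                  | Inr s \<Rightarrow> (if i = 0 \<and> a = s then 1 else 0))"

lemma fm_form:
  assumes n: "n \<ge> 1" and m: "m \<ge> 1"
  defines "N \<equiv> min n m"
  shows "fourier_measurement n m \<rho> = mat m m (\<lambda>(i,j). if i = j \<and> i < N then
      (\<Sum>a<n. \<Sum>b<n. cnj (Fp N a i) * \<rho> $$ (a,b) * Fp N b i) else 0) + outside_weight n N \<rho> \<cdot>\<^sub>m ket0bra0 m"
proof -
  have Nn: "N \<le> n" unfolding N_def by simp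
  show ?thesis unfolding fourier_measurement_def Let_def N_def[symmetric] embed_F[OF Nn]
    by (intro arg_cong2[where f="(+)"] refl eq_matI) (auto simp: Fp_def intro!: sum.cong)
qed

lemma fm_kraus:
  assumes n: "n \<ge> 1" and m: "m \<ge> 1"
  shows "kraus_form n m ({..<min n m} <+> {min n m..<n}) (Kfm (min n m)) (fourier_measurement n m)"
  unfolding kraus_form_def
proof (intro ballI conjI allI impI)
  define N where "N = min n m"
  have Nm: "N \<le> m" "N \<le> n" unfolding N_def by auto
  fix \<rho> :: "complex mat" assume \<rho>: "\<rho> \<in> carrier_mat n n"
  show "fourier_measurement n m \<rho> \<in> carrier_mat m m" unfolding fm_form[OF n m] by (simp add: ket0bra0_def)
  fix i j assume ij: "i < m" "j < m"
  have "fourier_measurement n m \<rho> $$ (i,j) = (if i = j \<and> i < N then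
      (\<Sum>a<n. \<Sum>b<n. cnj (Fp N a i) * \<rho> $$ (a,b) * Fp N b i) else 0) + (outside_weight n N \<rho> \<cdot>\<^sub>m ket0bra0 m) $$ (i,j)"
    unfolding fm_form[OF n m] N_def[symmetric] using ij by (simp add: ket0bra0_def)
  also have "(if i = j \<and> i < N then (\<Sum>a<n. \<Sum>b<n. cnj (Fp N a i) * \<rho> $$ (a,b) * Fp N b i) else 0)
     = (\<Sum>s<N. \<Sum>a<n. \<Sum>b<n. Kfm N (Inl s) i a * \<rho> $$ (a,b) * cnj (Kfm N (Inl s) j b))"
  proof -
    have "(\<Sum>s<N. \<Sum>a<n. \<Sum>b<n. Kfm N (Inl s) i a * \<rho> $$ (a,b) * cnj (Kfm N (Inl s) j b))
       = (\<Sum>s<N. if s = i then (if i = j then (\<Sum>a<n. \<Sum>b<n. cnj (Fp N a i) * \<rho> $$ (a,b) * Fp N b i) else 0) else 0)"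
      by (intro sum.cong refl) (auto simp: Kfm_def)
    also have "\<dots> = (if i = j \<and> i < N then (\<Sum>a<n. \<Sum>b<n. cnj (Fp N a i) * \<rho> $$ (a,b) * Fp N b i) else 0)"
      by auto
    finally show ?thesis by simp
  qed
  also have "(outside_weight n N \<rho> \<cdot>\<^sub>m ket0bra0 m) $$ (i,j)
     = (\<Sum>s\<in>{N..<n}. \<Sum>a<n. \<Sum>b<n. Kfm N (Inr s) i a * \<rho> $$ (a,b) * cnj (Kfm N (Inr s) j b))"
    unfolding ow_entry[OF \<rho> ij] by (simp add: Kfm_def)
  also have "(\<Sum>s<N. \<Sum>a<n. \<Sum>b<n. Kfm N (Inl s) i a * \<rho> $$ (a,b) * cnj (Kfm N (Inl s) j b)) +
      (\<Sum>s\<in>{N..<n}. \<Sum>a<n. \<Sum>b<n. Kfm N (Inr s) i a * \<rho> $$ (a,b) * cnj (Kfm N (Inr s) j b))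
    = (\<Sum>t\<in>{..<N} <+> {N..<n}. \<Sum>a<n. \<Sum>b<n. Kfm N t i a * \<rho> $$ (a,b) * cnj (Kfm N t j b))"
    by (simp add: sum.Plus comp_def)
  finally show "fourier_measurement n m \<rho> $$ (i,j) = (\<Sum>t\<in>{..<min n m} <+> {min n m..<n}. \<Sum>a<n. \<Sum>b<n. Kfm (min n m) t i a * \<rho> $$ (a,b) * cnj (Kfm (min n m) t j b))"
    unfolding N_def .
qed

lemma fm_channel:
  assumes n: "n \<ge> 1" and m: "m \<ge> 1"
  shows "quantum_channel n m (fourier_measurement n m)"
proof -
  define N where "N = min n m"
  have Nm: "N \<le> m" "N \<le> n" "N > 0" unfolding N_def using n m by auto
  have kf: "kraus_form n m ({..<N} <+> {N..<n}) (Kfm N) (fourier_measurement n m)"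
    unfolding N_def by (rule fm_kraus[OF n m])
  have tp: "trace_preserving n (fourier_measurement n m)"
  proof (rule kraus_tp[OF kf])
    fix a b assume ab: "a < n" "b < n"
    have e1: "(\<Sum>s<N. \<Sum>i<m. cnj (Kfm N (Inl s) i b) * Kfm N (Inl s) i a) = (if a < N \<and> b < N \<and> a = b then 1 else 0)"
    proof -
      have "(\<Sum>s<N. \<Sum>i<m. cnj (Kfm N (Inl s) i b) * Kfm N (Inl s) i a) = (\<Sum>s<N. Fp N b s * cnj (Fp N a s))"
      proof (rule sum.cong[OF refl])
        fix s assume "s \<in> {..<N}"
        then have s: "s < m" using Nm by auto
        have "(\<Sum>i<m. cnj (Kfm N (Inl s) i b) * Kfm N (Inl s) i a) = (\<Sum>i<m. if i = s then Fp N b s * cnj (Fp N a s) else 0)"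
          by (intro sum.cong refl) (auto simp: Kfm_def)
        then show "(\<Sum>i<m. cnj (Kfm N (Inl s) i b) * Kfm N (Inl s) i a) = Fp N b s * cnj (Fp N a s)" using s by simp
      qed
      also have "\<dots> = (if a < N \<and> b < N then (\<Sum>s<N. fourier_mat N $$ (b,s) * cnj (fourier_mat N $$ (a,s))) else 0)"
        by (cases "a < N \<and> b < N") (auto simp: Fp_def)
      also have "\<dots> = (if a < N \<and> b < N \<and> a = b then 1 else 0)"
        using fourier_orth2[OF Nm(3), of b a] by auto
      finally show ?thesis .
    qed
    have e2: "(\<Sum>s\<in>{N..<n}. \<Sum>i<m. cnj (Kfm N (Inr s) i b) * Kfm N (Inr s) i a) = (if N \<le> a \<and> a = b then 1 else 0)"
    proof -
      have "(\<Sum>s\<in>{N..<n}. \<Sum>i<m. cnj (Kfm N (Inr s) i b) * Kfm N (Inr s) i a)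
          = (\<Sum>s\<in>{N..<n}. if a = s \<and> b = s then cnj 1 * 1 else 0)"
        unfolding Kfm_def using m by (intro sum.cong refl) (simp add: unit_compl[of 0 m _ _ 1, simplified])
      also have "\<dots> = (\<Sum>s\<in>{N..<n}. if s = a then (if a = b then 1 else 0) else 0)"
        by (intro sum.cong refl) auto
      also have "\<dots> = (if N \<le> a \<and> a = b then 1 else 0)" using ab by auto
      finally show ?thesis .
    qed
    show "(\<Sum>t\<in>{..<N} <+> {N..<n}. \<Sum>i<m. cnj (Kfm N t i b) * Kfm N t i a) = (if a = b then 1 else 0)"
      using e1 e2 by (auto simp: sum.Plus comp_def)
  qed
  show ?thesis unfolding quantum_channel_def using kraus_lin[OF kf] kraus_cp[OF kf] tp by simp
qed



lemma lower_generic: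
  assumes Q: "quantum_channel n m \<Theta>" and N: "0 < N" "N \<le> m"
    and u: "\<And>k. k < N \<Longrightarrow> \<psi>s k \<in> unit_vecs_c n"
    and out: "\<And>k i. k < N \<Longrightarrow> i < m \<Longrightarrow> \<Theta> (proj (\<psi>s k)) $$ (i,i) = (if i = k then 1 else 0)"
    and dep: "\<And>k. k < N \<Longrightarrow> dephase (proj (\<psi>s k)) = dephase (proj (\<psi>s 0))"
    and \<Phi>: "\<Phi> \<in> DI_channels n m"
  shows "\<exists>\<psi>\<in>unit_vecs_c n. 2 * (real N - 1) / real N \<le> gdist n m \<Theta> \<Phi> \<psi>"
proof -
  have Q\<Phi>: "quantum_channel n m \<Phi>" by (rule DI_channel[OF \<Phi>])
  have di: "\<And>A. A \<in> carrier_mat n n \<Longrightarrow> dephase (\<Phi> A) = dephase (\<Phi> (dephase A))"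
    using \<Phi> unfolding DI_channels_def detection_incoherent_def by auto
  have u0: "\<psi>s 0 \<in> unit_vecs_c n" using u N by simp
  define q where "q i = \<Phi> (proj (\<psi>s 0)) $$ (i,i)" for i
  have pc: "proj (\<psi>s k) \<in> carrier_mat n n" if "k < N" for k
    using u[OF that] unfolding unit_vecs_c_def by auto
  have same: "\<Phi> (proj (\<psi>s k)) $$ (i,i) = q i" if k: "k < N" and i: "i < m" for k i
  proof -
    have "dephase (\<Phi> (proj (\<psi>s k))) = dephase (\<Phi> (proj (\<psi>s 0)))"
      using di[OF pc[OF k]] di[OF pc[OF N(1)]] dep[OF k] by simp
    moreover have "\<Phi> (proj (\<psi>s k)) \<in> carrier_mat m m" "\<Phi> (proj (\<psi>s 0)) \<in> carrier_mat m m"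
      using channel_carrier[OF Q\<Phi>] pc[OF k] pc[OF N(1)] by auto
    ultimately have "dephase (\<Phi> (proj (\<psi>s k))) $$ (i,i) = dephase (\<Phi> (proj (\<psi>s 0))) $$ (i,i)" by simp
    then show ?thesis using i \<open>\<Phi> (proj (\<psi>s k)) \<in> carrier_mat m m\<close> \<open>\<Phi> (proj (\<psi>s 0)) \<in> carrier_mat m m\<close>
      unfolding q_def by (simp add: dephase_def)
  qed
  have qpos: "Im (q i) = 0 \<and> Re (q i) \<ge> 0" if "i < m" for i using diag_prob(1)[OF Q\<Phi> u0 that] unfolding q_def .
  have qsum: "(\<Sum>i<m. Re (q i)) = 1" using diag_prob(2)[OF Q\<Phi> u0] unfolding q_def by (simp flip: Re_sum)
  have "\<exists>k<N. Re (q k) \<le> 1 / real N"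
  proof (rule ccontr)
    assume "\<not> (\<exists>k<N. Re (q k) \<le> 1 / real N)"
    then have gt: "\<And>k. k < N \<Longrightarrow> 1 / real N < Re (q k)" by auto
    have "(\<Sum>k<N. 1 / real N) < (\<Sum>k<N. Re (q k))"
      using N gt by (intro sum_strict_mono) auto
    also have "\<dots> \<le> (\<Sum>k<m. Re (q k))"
      using N qpos by (intro sum_mono2) auto
    finally show False using qsum N by simp
  qed
  then obtain k where k: "k < N" "Re (q k) \<le> 1 / real N" by auto
  have km: "k < m" using k N by simp
  have "gdist n m \<Theta> \<Phi> (\<psi>s k) = (\<Sum>i<m. cmod ((if i = k then 1 else 0) - q i))"
    unfolding gdist_formula[OF Q Q\<Phi> u[OF k(1)]] using out[OF k(1)] same[OF k(1)] by (intro sum.cong refl) auto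
  also have "\<dots> \<ge> (\<Sum>i<m. Re (q i) + (if i = k then 1 - 2 * Re (q i) else 0))"
  proof (rule sum_mono)
    fix i assume "i \<in> {..<m}"
    show "Re (q i) + (if i = k then 1 - 2 * Re (q i) else 0) \<le> cmod ((if i = k then 1 else 0) - q i)"
    proof (cases "i = k")
      case True
      have "Re (1 - q i) \<le> cmod (1 - q i)" by (rule complex_Re_le_cmod)
      then show ?thesis using True by simp
    next
      case False
      have "Re (q i) \<le> cmod (q i)" by (rule complex_Re_le_cmod)
      then show ?thesis using False by simp
    qed
  qed
  finally have "(\<Sum>i<m. Re (q i) + (if i = k then 1 - 2 * Re (q i) else 0)) \<le> gdist n m \<Theta> \<Phi> (\<psi>s k)" .
  moreover have "(\<Sum>i<m. Re (q i) + (if i = k then 1 - 2 * Re (q i) else 0)) = 2 - 2 * Re (q k)"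
    using qsum km by (simp add: sum.distrib)
  moreover have "2 * (real N - 1) / real N \<le> 2 - 2 * Re (q k)"
    using k N by (simp add: field_simps)
  ultimately show ?thesis using u[OF k(1)] by force
qed

lemma kraus_diag:
  assumes kf: "kraus_form n m T K \<Theta>" and c: "\<psi> \<in> carrier_vec n" and i: "i < m"
  shows "\<Theta> (proj \<psi>) $$ (i,i) = (\<Sum>t\<in>T. (\<Sum>a<n. K t i a * \<psi> $ a) * cnj (\<Sum>b<n. K t i b * \<psi> $ b))"
proof -
  have pc: "proj \<psi> \<in> carrier_mat n n" using c by simp
  have "\<Theta> (proj \<psi>) $$ (i,i) = (\<Sum>t\<in>T. \<Sum>a<n. \<Sum>b<n. K t i a * proj \<psi> $$ (a,b) * cnj (K t i b))"
    using kf pc i unfolding kraus_form_def by auto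
  also have "\<dots> = (\<Sum>t\<in>T. (\<Sum>a<n. K t i a * \<psi> $ a) * cnj (\<Sum>b<n. K t i b * \<psi> $ b))"
    unfolding cnj_sum sum_product using c by (intro sum.cong refl) (simp add: mult_ac)
  finally show ?thesis .
qed


lemma unit_gen:
  assumes N: "0 < N" "N \<le> n" and f: "\<And>a. a < N \<Longrightarrow> (cmod (f a))\<^sup>2 = 1 / real N"
  shows "vec n (\<lambda>a. if a < N then f a else 0) \<in> unit_vecs_c n"
proof -
  have "(\<Sum>a<n. (cmod (vec n (\<lambda>a. if a < N then f a else 0) $ a))\<^sup>2) = (\<Sum>a<n. if a < N then 1 / real N else 0)"
    using f by (intro sum.cong refl) auto
  also have "\<dots> = (\<Sum>a<N. 1 / real N)" by (rule sum_trunc[OF N(2)])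
  also have "\<dots> = 1" using N by simp
  finally show ?thesis unfolding unit_vecs_c_def by simp
qed

lemma dephase_gen:
  assumes N: "0 < N" "N \<le> n" and f: "\<And>a. a < N \<Longrightarrow> (cmod (f a))\<^sup>2 = 1 / real N"
  shows "dephase (proj (vec n (\<lambda>a. if a < N then f a else 0))) = mat n n (\<lambda>(i,j). if i = j \<and> i < N then 1 / of_nat N else 0)"
proof (rule eq_matI)
  fix i j assume "i < dim_row (mat n n (\<lambda>(i,j). if i = j \<and> i < N then 1 / of_nat N else (0::complex)))"
    "j < dim_col (mat n n (\<lambda>(i,j). if i = j \<and> i < N then 1 / of_nat N else (0::complex)))"
  then have ij: "i < n" "j < n" by auto
  have "f i * cnj (f i) = 1 / of_nat N" if "i < N"
  proof -
    have "f i * cnj (f i) = complex_of_real ((cmod (f i))\<^sup>2)" by (simp only: complex_norm_square)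
    also have "\<dots> = 1 / of_nat N" using f[OF that] by simp
    finally show ?thesis .
  qed
  then show "dephase (proj (vec n (\<lambda>a. if a < N then f a else 0))) $$ (i,j) =
      mat n n (\<lambda>(i,j). if i = j \<and> i < N then 1 / of_nat N else 0) $$ (i,j)"
    using ij by (auto simp: dephase_def)
qed (auto simp: dephase_def)

lemma fc_out:
  assumes n: "n \<ge> 1" and m: "m \<ge> 1" and k: "k < min n m" and i: "i < m"
  shows "fourier_channel n m (proj (vec n (\<lambda>a. if a < min n m then cnj (fourier_mat (min n m) $$ (a,k)) else 0))) $$ (i,i)
     = (if i = k then 1 else 0)"
proof -
  define N where "N = min n m"
  have Nm: "N \<le> m" "N \<le> n" "N > 0" "k < N" unfolding N_def using n m k by auto
  define \<psi> where "\<psi> = vec n (\<lambda>a. if a < N then cnj (fourier_mat N $$ (a,k)) else 0)"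
  have c: "\<psi> \<in> carrier_vec n" unfolding \<psi>_def by simp
  have kf: "kraus_form n m (insert None (Some ` {N..<n})) (Kfc N) (fourier_channel n m)"
    unfolding N_def by (rule fc_kraus[OF n m])
  have gN: "(\<Sum>a<n. Kfc N None i a * \<psi> $ a) = (if i = k then 1 else 0)"
  proof -
    have "(\<Sum>a<n. Kfc N None i a * \<psi> $ a) = (\<Sum>a<n. if a < N then (if i < N then fourier_mat N $$ (i,a) * cnj (fourier_mat N $$ (k,a)) else 0) else 0)"
      unfolding \<psi>_def Kfc_def using Nm by (intro sum.cong refl) (auto simp: fourier_sym)
    also have "\<dots> = (\<Sum>a<N. if i < N then fourier_mat N $$ (i,a) * cnj (fourier_mat N $$ (k,a)) else 0)"
      by (rule sum_trunc[OF Nm(2)])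
    also have "\<dots> = (if i = k then 1 else 0)"
    proof (cases "i < N")
      case True then show ?thesis using fourier_orth2[OF Nm(3) True Nm(4)] by simp
    next
      case False then show ?thesis using Nm(4) by auto
    qed
    finally show ?thesis .
  qed
  have gS: "(\<Sum>a<n. Kfc N (Some s) i a * \<psi> $ a) = 0" if "s \<in> {N..<n}" for s
  proof -
    have "(\<Sum>a<n. Kfc N (Some s) i a * \<psi> $ a) = (\<Sum>a<n. 0)"
      unfolding \<psi>_def Kfc_def using that by (intro sum.cong refl) auto
    then show ?thesis by simp
  qed
  have "fourier_channel n m (proj \<psi>) $$ (i,i) = (if i = k then 1 else 0)"
    unfolding kraus_diag[OF kf c i] sum_opt[OF finite_atLeastLessThan] gN using gS by simp
  then show ?thesis unfolding \<psi>_def N_def .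
qed

lemma fm_out:
  assumes n: "n \<ge> 1" and m: "m \<ge> 1" and k: "k < min n m" and i: "i < m"
  shows "fourier_measurement n m (proj (vec n (\<lambda>a. if a < min n m then fourier_mat (min n m) $$ (a,k) else 0))) $$ (i,i)
     = (if i = k then 1 else 0)"
proof -
  define N where "N = min n m"
  have Nm: "N \<le> m" "N \<le> n" "N > 0" "k < N" unfolding N_def using n m k by auto
  define \<psi> where "\<psi> = vec n (\<lambda>a. if a < N then fourier_mat N $$ (a,k) else 0)"
  have c: "\<psi> \<in> carrier_vec n" unfolding \<psi>_def by simp
  have kf: "kraus_form n m ({..<N} <+> {N..<n}) (Kfm N) (fourier_measurement n m)"
    unfolding N_def by (rule fm_kraus[OF n m])
  have gL: "(\<Sum>a<n. Kfm N (Inl s) i a * \<psi> $ a) = (if i = s \<and> s = k then 1 else 0)" if s: "s < N" for s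
  proof -
    have "(\<Sum>a<n. Kfm N (Inl s) i a * \<psi> $ a) = (\<Sum>a<n. if a < N then (if i = s then cnj (fourier_mat N $$ (a,s)) * fourier_mat N $$ (a,k) else 0) else 0)"
      unfolding \<psi>_def Kfm_def Fp_def using Nm by (intro sum.cong refl) auto
    also have "\<dots> = (\<Sum>a<N. if i = s then cnj (fourier_mat N $$ (a,s)) * fourier_mat N $$ (a,k) else 0)"
      by (rule sum_trunc[OF Nm(2)])
    also have "\<dots> = (if i = s \<and> s = k then 1 else 0)"
    proof (cases "i = s")
      case True then show ?thesis using fourier_orth[OF Nm(3) s Nm(4)] by simp
    next
      case False then show ?thesis by auto
    qed
    finally show ?thesis .
  qed
  have gR: "(\<Sum>a<n. Kfm N (Inr s) i a * \<psi> $ a) = 0" if "s \<in> {N..<n}" for s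
  proof -
    have "(\<Sum>a<n. Kfm N (Inr s) i a * \<psi> $ a) = (\<Sum>a<n. 0)"
      unfolding \<psi>_def Kfm_def using that by (intro sum.cong refl) auto
    then show ?thesis by simp
  qed
  have "(\<Sum>s<N. (\<Sum>a<n. Kfm N (Inl s) i a * \<psi> $ a) * cnj (\<Sum>b<n. Kfm N (Inl s) i b * \<psi> $ b))
      = (\<Sum>s<N. if s = k then (if i = k then 1 else 0) else 0)"
    using gL by (intro sum.cong refl) auto
  also have "\<dots> = (if i = k then 1 else 0)" using Nm(4) by simp
  finally have eL: "(\<Sum>s<N. (\<Sum>a<n. Kfm N (Inl s) i a * \<psi> $ a) * cnj (\<Sum>b<n. Kfm N (Inl s) i b * \<psi> $ b))
      = (if i = k then 1 else 0)" .
  have "fourier_measurement n m (proj \<psi>) $$ (i,i) = (if i = k then 1 else 0)"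
    unfolding kraus_diag[OF kf c i] using eL gR by (simp add: sum.Plus comp_def)
  then show ?thesis unfolding \<psi>_def N_def .
qed



lemma fourier_lower:
  assumes n: "n \<ge> 1" and m: "m \<ge> 1" and Q: "quantum_channel n m \<Theta>"
    and g: "\<And>a k. a < min n m \<Longrightarrow> k < min n m \<Longrightarrow> (cmod (f a k))\<^sup>2 = 1 / real (min n m)"
    and out: "\<And>k i. k < min n m \<Longrightarrow> i < m \<Longrightarrow>
        \<Theta> (proj (vec n (\<lambda>a. if a < min n m then f a k else 0))) $$ (i,i) = (if i = k then 1 else 0)"
  shows "2 * (real (min n m) - 1) / real (min n m) \<le> M_tilde_diamond n m \<Theta>"
proof (rule M_lower[OF n Q])
  define N where "N = min n m"
  have Nm: "N \<le> m" "N \<le> n" "N > 0" unfolding N_def using n m by auto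
  show "DI_channels n m \<noteq> {}" using unif_DI[of m n] m by auto
  fix \<Phi> assume \<Phi>: "\<Phi> \<in> DI_channels n m"
  define \<psi>s where "\<psi>s k = vec n (\<lambda>a. if a < N then f a k else 0)" for k
  have "\<exists>\<psi>\<in>unit_vecs_c n. 2 * (real N - 1) / real N \<le> gdist n m \<Theta> \<Phi> \<psi>"
  proof (rule lower_generic[OF Q Nm(3) Nm(1), of \<psi>s])
    show "\<And>k. k < N \<Longrightarrow> \<psi>s k \<in> unit_vecs_c n"
      unfolding \<psi>s_def using Nm g unfolding N_def by (intro unit_gen) auto
    show "\<And>k i. k < N \<Longrightarrow> i < m \<Longrightarrow> \<Theta> (proj (\<psi>s k)) $$ (i,i) = (if i = k then 1 else 0)"
      unfolding \<psi>s_def N_def by (rule out)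
    show "\<And>k. k < N \<Longrightarrow> dephase (proj (\<psi>s k)) = dephase (proj (\<psi>s 0))"
    proof -
      fix k assume k: "k < N"
      have "dephase (proj (\<psi>s k)) = mat n n (\<lambda>(i,j). if i = j \<and> i < N then 1 / of_nat N else 0)"
        unfolding \<psi>s_def using Nm g k unfolding N_def by (intro dephase_gen) auto
      moreover have "dephase (proj (\<psi>s 0)) = mat n n (\<lambda>(i,j). if i = j \<and> i < N then 1 / of_nat N else 0)"
        unfolding \<psi>s_def using Nm g unfolding N_def by (intro dephase_gen) auto
      ultimately show "dephase (proj (\<psi>s k)) = dephase (proj (\<psi>s 0))" by simp
    qed
    show "\<Phi> \<in> DI_channels n m" by (rule \<Phi>)
  qed
  then show "\<exists>\<psi>\<in>unit_vecs_c n. 2 * (real (min n m) - 1) / real (min n m) \<le> gdist n m \<Theta> \<Phi> \<psi>"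
    unfolding N_def .
qed

theorem proposition10:
  fixes n m :: nat
  assumes "n \<ge> 1" and "m \<ge> 1"
  defines "N0 \<equiv> min n m"
  shows "(\<forall>\<Theta>. quantum_channel n m \<Theta> \<longrightarrow>
            M_tilde_diamond n m \<Theta> \<le> 2 * (real N0 - 1) / real N0)
       \<and> quantum_channel n m (fourier_channel n m)
       \<and> M_tilde_diamond n m (fourier_channel n m) = 2 * (real N0 - 1) / real N0
       \<and> quantum_channel n m (fourier_measurement n m)
       \<and> M_tilde_diamond n m (fourier_measurement n m) = 2 * (real N0 - 1) / real N0"
proof -
  have c1: "\<forall>\<Theta>. quantum_channel n m \<Theta> \<longrightarrow> M_tilde_diamond n m \<Theta> \<le> 2 * (real N0 - 1) / real N0"
    unfolding N0_def using first_conj[OF assms(1,2)] by blast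
  have qc: "quantum_channel n m (fourier_channel n m)" by (rule fc_channel[OF assms(1,2)])
  have qm: "quantum_channel n m (fourier_measurement n m)" by (rule fm_channel[OF assms(1,2)])
  have lc: "2 * (real N0 - 1) / real N0 \<le> M_tilde_diamond n m (fourier_channel n m)"
    unfolding N0_def
  proof (rule fourier_lower[OF assms(1,2) qc, where f="\<lambda>a k. cnj (fourier_mat (min n m) $$ (a,k))"])
    show "\<And>a k. a < min n m \<Longrightarrow> k < min n m \<Longrightarrow> (cmod (cnj (fourier_mat (min n m) $$ (a, k))))\<^sup>2 = 1 / real (min n m)"
      using fourier_abs assms(1,2) by simp
    show "\<And>k i. k < min n m \<Longrightarrow> i < m \<Longrightarrow> fourier_channel n m (proj (vec n (\<lambda>a. if a < min n m then cnj (fourier_mat (min n m) $$ (a, k)) else 0))) $$ (i, i) = (if i = k then 1 else 0)"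
      by (rule fc_out[OF assms(1,2)])
  qed
  have lm: "2 * (real N0 - 1) / real N0 \<le> M_tilde_diamond n m (fourier_measurement n m)"
    unfolding N0_def
  proof (rule fourier_lower[OF assms(1,2) qm, where f="\<lambda>a k. fourier_mat (min n m) $$ (a,k)"])
    show "\<And>a k. a < min n m \<Longrightarrow> k < min n m \<Longrightarrow> (cmod (fourier_mat (min n m) $$ (a, k)))\<^sup>2 = 1 / real (min n m)"
      using fourier_abs assms(1,2) by simp
    show "\<And>k i. k < min n m \<Longrightarrow> i < m \<Longrightarrow> fourier_measurement n m (proj (vec n (\<lambda>a. if a < min n m then fourier_mat (min n m) $$ (a, k) else 0))) $$ (i, i) = (if i = k then 1 else 0)"
      by (rule fm_out[OF assms(1,2)])
  qed
  show ?thesis using c1 qc qm lc lm by (meson order_antisym)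
qed


end
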